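(* Let $p$ be a prime and write $F_{BP}(x,y)=\sum_{i,j}\alpha_{ij}x^iy^j$. For all integers $i,j\ge0$ with $i+j\ge1$, $$\alpha_{ij}=\sum_{\substack{(\nu_1,\nu_2,\dots)\\ \sum_{r\ge1}(p^r-1)\nu_r=i+j-1}}\ \sum_{\substack{i_0+\sum_{r\ge1}p^r i_r=i\\ j_0+\sum_{r\ge1}p^rj_r=j\\ i_r+j_r+k_r=\nu_r\ (r\ge1)}}(-1)^{\sum_{r\ge1}k_r}\frac{\bigl(i_0+j_0+\sum_{r\ge1}(i_r+j_r+k_r)-1\bigr)!}{i_0!\,j_0!\,\prod_{r\ge1}i_r!\,j_r!\,k_r!}\ \prod_{r\ge1}l_r^{\nu_r},$$ where all $\nu_r,i_r,j_r,k_r$ range over nonnegative integers (finitely many nonzero). In particular $\alpha_{ij}=0$ unless $i+j-1$ is divisible by $p-1$.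
   Context: $BP_*=\mathbb{Z}_{(p)}[v_1,v_2,\dots]$, $|v_n|=2(p^n-1)$, is the coefficient ring of Brown–Peterson cohomology ($v_n$ the Hazewinkel generators), and $F_{BP}$ is its universal $p$-typical formal group law, with logarithm $\log_{BP}(x)=x+l_1x^p+l_2x^{p^2}+\cdots$, $l_n\in BP_*\otimes\mathbb{Q}$, so that $F_{BP}(x,y)=\log_{BP}^{-1}(\log_{BP}(x)+\log_{BP}(y))$. The $l_n$ satisfy $p\,l_n=v_n+v_{n-1}^{p}l_1+\cdots+v_1^{p^{n-1}}l_{n-1}$. The $l_n$ are algebraically independent over $\mathbb{Q}$ and $BP_*\otimes\mathbb{Q}=\mathbb{Q}[l_1,l_2,\dots]$. *)

theory Defs
  imports "HOL-Computational_Algebra.Primes"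
begin

text \<open>Formal power series in two variables x, y over a ring, represented by their
coefficient functions: f m n is the coefficient of x^m y^n.\<close>

definition bs_mult :: "(nat \<Rightarrow> nat \<Rightarrow> 'a::comm_ring_1) \<Rightarrow> (nat \<Rightarrow> nat \<Rightarrow> 'a) \<Rightarrow> nat \<Rightarrow> nat \<Rightarrow> 'a" where
  "bs_mult f g = (\<lambda>m n. \<Sum>a\<le>m. \<Sum>b\<le>n. f a b * g (m - a) (n - b))"

fun bs_pow :: "(nat \<Rightarrow> nat \<Rightarrow> 'a::comm_ring_1) \<Rightarrow> nat \<Rightarrow> nat \<Rightarrow> nat \<Rightarrow> 'a" where
  "bs_pow f 0 = (\<lambda>m n. if m = 0 \<and> n = 0 then 1 else 0)"
| "bs_pow f (Suc k) = bs_mult f (bs_pow f k)"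

text \<open>Coefficients of the p-typical logarithm log(x) = x + sum_{r>=1} l_r x^(p^r).\<close>

definition log_coeff :: "nat \<Rightarrow> (nat \<Rightarrow> 'a::comm_ring_1) \<Rightarrow> nat \<Rightarrow> 'a" where
  "log_coeff p l k = (if k = 1 then 1 else if (\<exists>r\<ge>1. k = p ^ r) then l (THE r. r \<ge> 1 \<and> k = p ^ r) else 0)"

text \<open>Coefficient of x^m y^n in log(F(x,y)) = F + sum_{r>=1} l_r F^(p^r), for F with
zero constant term.  For such F, F^(p^r) has no monomials of total degree < p^r,
and p^r > m + n whenever r > m + n, so the sum over r is finite.\<close>

definition log_of_bs :: "nat \<Rightarrow> (nat \<Rightarrow> 'a::comm_ring_1) \<Rightarrow> (nat \<Rightarrow> nat \<Rightarrow> 'a) \<Rightarrow> nat \<Rightarrow> nat \<Rightarrow> 'a" where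
  "log_of_bs p l F = (\<lambda>m n. F m n + (\<Sum>r\<in>{1..m+n}. l r * bs_pow F (p ^ r) m n))"

definition log_sum :: "nat \<Rightarrow> (nat \<Rightarrow> 'a::comm_ring_1) \<Rightarrow> nat \<Rightarrow> nat \<Rightarrow> 'a" where
  "log_sum p l = (\<lambda>m n. (if n = 0 then log_coeff p l m else 0) + (if m = 0 then log_coeff p l n else 0))"

text \<open>The formal group law F(x,y) = log^{-1}(log x + log y): the unique bivariate power
series with zero constant term satisfying log(F(x,y)) = log x + log y.
FBP_coeff p l i j is alpha_ij.\<close>

definition FBP_coeff :: "nat \<Rightarrow> (nat \<Rightarrow> 'a::field_char_0) \<Rightarrow> nat \<Rightarrow> nat \<Rightarrow> 'a" where
  "FBP_coeff p l = (THE F. F 0 0 = 0 \<and> log_of_bs p l F = log_sum p l)"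

end

theory Submission
  imports Defs "HOL-Computational_Algebra.Formal_Power_Series"
begin

unbundle fps_syntax

definition emb :: "(nat \<Rightarrow> nat \<Rightarrow> 'a::comm_ring_1) \<Rightarrow> 'a fps fps" where
  "emb f = Abs_fps (\<lambda>n. Abs_fps (\<lambda>m. f m n))"

lemma emb_nth[simp]: "emb f $ n $ m = f m n"
  by (simp add: emb_def)

lemma emb_inj: "emb f = emb g \<Longrightarrow> f = g"
  by (metis emb_nth ext)

lemma emb_mult: "emb (bs_mult f g) = emb f * emb g"
proof (rule fps_ext, rule fps_ext)
  fix n m
  have "(emb f * emb g) $ n $ m = (\<Sum>b=0..n. (emb f $ b * emb g $ (n - b)) $ m)"
    by (simp add: fps_mult_nth fps_sum_nth)
  also have "\<dots> = (\<Sum>b=0..n. \<Sum>a=0..m. f a b * g (m - a) (n - b))"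
    by (simp add: fps_mult_nth)
  also have "\<dots> = bs_mult f g m n"
    unfolding bs_mult_def atLeast0AtMost by (rule sum.swap)
  finally show "emb (bs_mult f g) $ n $ m = (emb f * emb g) $ n $ m" by simp
qed

lemma emb_one: "emb (\<lambda>m n. if m = 0 \<and> n = 0 then 1 else 0) = 1"
  by (rule fps_ext, rule fps_ext) (auto simp: fps_one_nth)

lemma emb_pow: "emb (bs_pow f k) = emb f ^ k"
  by (induction k) (simp_all add: emb_one emb_mult)

lemma bs_pow_add: "bs_pow f (a + b) = bs_mult (bs_pow f a) (bs_pow f b)"
  by (rule emb_inj) (simp add: emb_mult emb_pow power_add)

lemma bs_pow_0_0: "k \<ge> 1 \<Longrightarrow> bs_pow f k 0 0 = f 0 0 ^ k"
proof (induction k)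
  case (Suc k) then show ?case by (cases k) (auto simp: bs_mult_def)
qed simp

lemma bs_pow_vanish:
  assumes "S 0 0 = 0"
  shows "m + n < k \<Longrightarrow> bs_pow S k m n = 0"
proof (induction k arbitrary: m n)
  case 0 then show ?case by simp
next
  case (Suc k)
  have "S a b * bs_pow S k (m - a) (n - b) = 0" if "a \<le> m" "b \<le> n" for a b
  proof (cases "a = 0 \<and> b = 0")
    case True then show ?thesis using assms by simp
  next
    case False
    then have "(m - a) + (n - b) < k" using Suc.prems that by linarith
    then show ?thesis using Suc.IH by simp
  qed
  then show ?case by (simp add: bs_mult_def)
qed


definition C :: "'a::comm_ring_1 fps \<Rightarrow> (nat \<Rightarrow> nat \<Rightarrow> 'a) \<Rightarrow> nat \<Rightarrow> nat \<Rightarrow> 'a" where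
  "C h S = (\<lambda>m n. \<Sum>k\<le>m+n. h$k * bs_pow S k m n)"

lemma if1_mult': "(x::'a::semiring_1) * (if P then 1 else 0) = (if P then x else 0)"
  by simp

lemma if1_mult: "(if P then 1 else 0) * (x::'a::semiring_1) = (if P then x else 0)"
  by simp

lemma C_ext:
  assumes "S 0 0 = 0" "m + n \<le> N"
  shows "C h S m n = (\<Sum>k\<le>N. h$k * bs_pow S k m n)"
  unfolding C_def
  by (rule sum.mono_neutral_left) (use assms bs_pow_vanish[of S, OF assms(1)] in auto)

definition cc :: "'a::comm_ring_1 \<Rightarrow> 'a fps fps" where "cc c = fps_const (fps_const c)"

lemma cc_nth[simp]: "(cc c * F) $ n $ m = c * F $ n $ m"
  by (simp add: cc_def)

lemma emb_sum: "emb (\<lambda>m n. \<Sum>k\<in>A. c k * F k m n) = (\<Sum>k\<in>A. cc (c k) * emb (F k))"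
  by (rule fps_ext, rule fps_ext) (simp add: fps_sum_nth)

lemma bs_mult_cong:
  assumes "\<And>a b. a \<le> m \<Longrightarrow> b \<le> n \<Longrightarrow> f a b = f' a b"
      and "\<And>a b. a \<le> m \<Longrightarrow> b \<le> n \<Longrightarrow> g a b = g' a b"
  shows "bs_mult f g m n = bs_mult f' g' m n"
  unfolding bs_mult_def using assms by (intro sum.cong refl) auto

lemma bs_mult_nth: "bs_mult f g m n = (emb f * emb g) $ n $ m"
  by (simp add: emb_mult[symmetric])

lemma C_mult:
  assumes S0: "S 0 0 = 0"
  shows "C (h1 * h2) S = bs_mult (C h1 S) (C h2 S)"
proof (intro ext)
  fix m n :: nat
  define N where "N = m + n"
  let ?P = "\<lambda>k. bs_pow S k m n"
  let ?T = "\<lambda>h. (\<lambda>a b. \<Sum>k\<le>N. h$k * bs_pow S k a b)"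
  have "bs_mult (C h1 S) (C h2 S) m n = bs_mult (?T h1) (?T h2) m n"
    by (intro bs_mult_cong C_ext[of S, OF S0]) (auto simp: N_def)
  also have "\<dots> = (emb (?T h1) * emb (?T h2)) $ n $ m"
    by (rule bs_mult_nth)
  also have "emb (?T h1) * emb (?T h2) = (\<Sum>k1\<le>N. \<Sum>k2\<le>N. cc (h1$k1 * h2$k2) * emb (bs_pow S (k1+k2)))"
    by (simp add: emb_sum sum_product cc_def emb_pow power_add algebra_simps)
  also have "\<dots> $ n $ m = (\<Sum>k1\<le>N. \<Sum>k2\<le>N. h1$k1 * h2$k2 * ?P (k1 + k2))"
    by (simp add: fps_sum_nth)
  also have "\<dots> = (\<Sum>(k1,k2)\<in>{..N}\<times>{..N}. h1$k1 * h2$k2 * ?P (k1 + k2))"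
    by (simp add: sum.cartesian_product)
  also have "\<dots> = (\<Sum>(k1,k2)\<in>{(k1,k2). k1 + k2 \<le> N}. h1$k1 * h2$k2 * ?P (k1 + k2))"
    apply (rule sum.mono_neutral_right)
      apply (auto simp: N_def)
    using bs_pow_vanish[of S, OF S0] by (metis mult_zero_right not_le)
  also have "\<dots> = (\<Sum>k=0..N. \<Sum>i=0..k. h1$i * h2$(k-i) * ?P k)"
    by (rule sum_pair_less_iff)
  also have "\<dots> = C (h1 * h2) S m n"
    by (simp add: C_def N_def fps_mult_nth sum_distrib_right atLeast0AtMost)
  finally show "C (h1 * h2) S m n = bs_mult (C h1 S) (C h2 S) m n" by simp
qed

lemma dd: "(\<Sum>a\<le>(m::nat). \<Sum>b\<le>(n::nat). if m = a \<and> n = b then f a b else 0) = (f m n :: 'a::comm_monoid_add)"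
proof -
  have "(\<Sum>b\<le>n. if m = a \<and> n = b then f a b else 0) = (if m = a then f a n else 0)" for a
    by (cases "m = a") (simp_all add: sum.delta')
  then show ?thesis by (simp add: sum.delta)
qed

lemma C_one: "C 1 S = bs_pow S 0"
  by (rule ext, rule ext) (simp add: C_def fps_one_nth if1_mult)

lemma C_pow:
  assumes "S 0 0 = 0"
  shows "C (h ^ i) S = bs_pow (C h S) i"
  by (induction i) (simp_all add: C_one C_mult[of S, OF assms])

lemma C_X:
  assumes "S 0 0 = 0"
  shows "C fps_X S = S"
proof (intro ext)
  fix m n :: nat
  show "C fps_X S m n = S m n"
  proof (cases "m + n = 0")
    case True then show ?thesis using assms by (simp add: C_def)
  next
    case False
    then have "C fps_X S m n = (\<Sum>k\<in>{1}. fps_X$k * bs_pow S k m n)"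
      unfolding C_def by (intro sum.mono_neutral_right) (auto simp: fps_X_def)
    also have "\<dots> = S m n" by (simp add: bs_mult_def if1_mult' dd)
    finally show ?thesis .
  qed
qed

lemma C_0: "C h S 0 0 = h $ 0"
  by (simp add: C_def)

lemma C_S0: "C g S 0 0 = 0 \<longleftrightarrow> g $ 0 = 0"
  by (simp add: C_0)

lemma C_comp:
  assumes S0: "S 0 0 = 0" and g0: "g $ 0 = 0"
  shows "C (h oo g) S = C h (C g S)"
proof (intro ext)
  fix m n :: nat
  define N where "N = m + n"
  let ?P = "\<lambda>k. bs_pow S k m n"
  have "C (h oo g) S m n = (\<Sum>k\<le>N. (\<Sum>i=0..k. h$i * (g^i$k)) * ?P k)"
    by (simp add: C_def N_def fps_compose_nth mult.commute)
  also have "\<dots> = (\<Sum>k\<le>N. \<Sum>i\<le>N. h$i * (g^i$k) * ?P k)"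
  proof (intro sum.cong refl)
    fix k assume k: "k \<in> {..N}"
    have "(\<Sum>i=0..k. h$i * (g^i$k)) = (\<Sum>i\<le>N. h$i * (g^i$k))"
      by (rule sum.mono_neutral_left) (use k startsby_zero_power_prefix[OF g0] in auto)
    then show "(\<Sum>i=0..k. h$i * (g^i$k)) * ?P k = (\<Sum>i\<le>N. h$i * (g^i$k) * ?P k)"
      by (simp add: sum_distrib_right)
  qed
  also have "\<dots> = (\<Sum>i\<le>N. h$i * (\<Sum>k\<le>N. g^i$k * ?P k))"
    by (subst sum.swap) (simp add: sum_distrib_left mult.assoc)
  also have "\<dots> = (\<Sum>i\<le>N. h$i * C (g^i) S m n)"
    by (simp add: C_def N_def)
  also have "\<dots> = C h (C g S) m n"
    using C_pow[of S, OF S0] by (simp add: C_def N_def)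
  finally show "C (h oo g) S m n = C h (C g S) m n" .
qed


lemma r_less_pow: "p \<ge> (2::nat) \<Longrightarrow> r < p ^ r"
proof -
  assume "p \<ge> 2"
  have "r < 2 ^ r" by (rule less_exp)
  also have "(2::nat) ^ r \<le> p ^ r" using \<open>p \<ge> 2\<close> by (simp add: power_mono)
  finally show ?thesis .
qed

lemma log_coeff_pow:
  assumes "p \<ge> 2" "r \<ge> 1"
  shows "log_coeff p l (p ^ r) = l r"
proof -
  have ne: "p ^ r \<noteq> 1" using assms by simp
  have "(THE r'. r' \<ge> 1 \<and> p ^ r = p ^ r') = r"
    by (rule the_equality) (use assms in \<open>auto simp: power_inject_exp\<close>)
  then show ?thesis using ne assms unfolding log_coeff_def by auto
qed

lemma log_coeff_1: "log_coeff p l 1 = 1"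
  by (simp add: log_coeff_def)

lemma log_coeff_Suc0: "log_coeff p l (Suc 0) = 1"
  by (simp add: log_coeff_def)

lemma log_coeff_0: "p \<ge> 2 \<Longrightarrow> log_coeff p l 0 = 0"
  by (auto simp: log_coeff_def)

lemma log_coeff_other:
  "k \<noteq> 1 \<Longrightarrow> (\<And>r. r \<ge> 1 \<Longrightarrow> k \<noteq> p ^ r) \<Longrightarrow> log_coeff p l k = 0"
  by (auto simp: log_coeff_def)

definition Lf :: "nat \<Rightarrow> (nat \<Rightarrow> 'a::comm_ring_1) \<Rightarrow> 'a fps" where
  "Lf p l = Abs_fps (log_coeff p l)"

lemma Lf_nth: "Lf p l $ k = log_coeff p l k"
  by (simp add: Lf_def)

lemma bs_pow_1: "bs_pow F 1 = F"
  by (rule emb_inj) (simp only: emb_pow power_one_right)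

lemma bs_mult_one: "bs_mult F (\<lambda>m n. if m = 0 \<and> n = 0 then 1 else 0) = F"
  using bs_pow_1[of F] by simp

lemma C_L:
  assumes p2: "p \<ge> 2" and F0: "F 0 0 = 0"
  shows "C (Lf p l) F = log_of_bs p l F"
proof (intro ext)
  fix m n :: nat
  define N where "N = m + n"
  let ?P = "\<lambda>k. bs_pow F k m n"
  let ?lc = "log_coeff p l"
  show "C (Lf p l) F m n = log_of_bs p l F m n"
  proof (cases "N = 0")
    case True
    then show ?thesis using F0 p2 by (simp add: C_def log_of_bs_def N_def Lf_nth log_coeff_0)
  next
    case False
    define Pw where "Pw = (\<lambda>r. p ^ r) ` {1..N}"
    have finPw: "finite Pw" by (simp add: Pw_def)
    have "C (Lf p l) F m n = (\<Sum>k\<le>N. ?lc k * ?P k)"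
      by (simp add: C_def N_def Lf_nth)
    also have "\<dots> = (\<Sum>k\<in>{..N} \<union> Pw. ?lc k * ?P k)"
      by (rule sum.mono_neutral_left) (auto simp: finPw N_def bs_pow_vanish[of F, OF F0])
    also have "\<dots> = (\<Sum>k\<in>{1} \<union> Pw. ?lc k * ?P k)"
    proof (rule sum.mono_neutral_right)
      show "finite ({..N} \<union> Pw)" using finPw by simp
      show "{1} \<union> Pw \<subseteq> {..N} \<union> Pw" using False by auto
      show "\<forall>k\<in>{..N} \<union> Pw - ({1} \<union> Pw). ?lc k * ?P k = 0"
      proof
        fix k assume k: "k \<in> {..N} \<union> Pw - ({1} \<union> Pw)"
        have "?lc k = 0"
        proof (rule log_coeff_other)
          show "k \<noteq> 1" using k by auto
          fix r :: nat assume r: "r \<ge> 1"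
          show "k \<noteq> p ^ r"
          proof
            assume kr: "k = p ^ r"
            then have "r \<le> N" using k r_less_pow[OF p2, of r] by auto
            then have "k \<in> Pw" using r kr by (auto simp: Pw_def)
            then show False using k by auto
          qed
        qed
        then show "?lc k * ?P k = 0" by simp
      qed
    qed
    also have "\<dots> = ?lc 1 * ?P 1 + (\<Sum>k\<in>Pw. ?lc k * ?P k)"
    proof -
      have "p ^ r \<noteq> 1" if "r \<ge> 1" for r using one_less_power[of p r] p2 that by auto
      then have "1 \<notin> Pw" unfolding Pw_def by (metis atLeastAtMost_iff imageE)
      then show ?thesis using finPw by simp
    qed
    also have "(\<Sum>k\<in>Pw. ?lc k * ?P k) = (\<Sum>r\<in>{1..N}. ?lc (p ^ r) * ?P (p ^ r))"
      unfolding Pw_def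
      by (rule sum.reindex[unfolded comp_def]) (use p2 in \<open>auto simp: inj_on_def power_inject_exp\<close>)
    also have "\<dots> = (\<Sum>r\<in>{1..N}. l r * ?P (p ^ r))"
      using p2 by (intro sum.cong refl) (simp add: log_coeff_pow)
    finally show ?thesis
      by (simp add: log_of_bs_def N_def log_coeff_Suc0 bs_mult_one)
  qed
qed

lemma Lf_0: "p \<ge> 2 \<Longrightarrow> Lf p l $ 0 = 0"
  by (simp add: Lf_nth log_coeff_0)

lemma Lf_1: "Lf p l $ 1 = 1"
  by (simp add: Lf_nth log_coeff_Suc0)

lemma fps_inv_0: "fps_inv a $ 0 = 0"
  by (simp add: fps_inv_def)

lemma log_sum_0: "p \<ge> 2 \<Longrightarrow> log_sum p l 0 0 = 0"
  by (simp add: log_sum_def log_coeff_0)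

lemma FBP_eq:
  fixes l :: "nat \<Rightarrow> 'a::field_char_0"
  assumes p2: "p \<ge> 2"
  shows "FBP_coeff p l = C (fps_inv (Lf p l)) (log_sum p l)"
proof -
  let ?L = "Lf p l" and ?g = "fps_inv (Lf p l)" and ?S = "log_sum p l"
  have L0: "?L $ 0 = 0" using p2 by (rule Lf_0)
  have L1: "?L $ 1 \<noteq> 0" by (simp add: Lf_nth log_coeff_Suc0)
  have S0: "?S 0 0 = 0" using p2 by (rule log_sum_0)
  have g0: "?g $ 0 = 0" by (rule fps_inv_0)
  show ?thesis unfolding FBP_coeff_def
  proof (rule the_equality)
    have F0: "C ?g ?S 0 0 = 0" by (simp add: C_0 g0)
    have "log_of_bs p l (C ?g ?S) = C ?L (C ?g ?S)"
      by (rule C_L[where F="C ?g ?S", symmetric, OF p2 F0])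
    also have "\<dots> = C (?L oo ?g) ?S"
      by (rule C_comp[where S="?S", symmetric, OF S0 g0])
    also have "\<dots> = ?S" by (simp add: fps_inv_right[OF L0 L1] C_X[of ?S, OF S0])
    finally show "C ?g ?S 0 0 = 0 \<and> log_of_bs p l (C ?g ?S) = ?S" using F0 by simp
  next
    fix F assume F: "F 0 0 = 0 \<and> log_of_bs p l F = ?S"
    then have F0: "F 0 0 = 0" by simp
    have "F = C fps_X F" by (rule C_X[of F, OF F0, symmetric])
    also have "\<dots> = C (?g oo ?L) F" by (simp add: fps_inv[OF L0 L1])
    also have "\<dots> = C ?g (C ?L F)" by (rule C_comp[where S=F, OF F0 L0])
    also have "C ?L F = ?S" using F C_L[where F=F, OF p2 F0] by simp
    finally show "F = C ?g ?S" .
  qed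
qed


lemma key_coeff:
  fixes P :: "'a::field_char_0 fps"
  assumes P0: "P $ 0 = 1"
  shows "(inverse P ^ (m+1) * fps_deriv (fps_X * P)) $ m = (if m = 0 then 1 else 0)"
proof -
  define Q where "Q = inverse P"
  have QP: "Q * P = 1" unfolding Q_def using P0 by (intro inverse_mult_eq_1) simp
  have Q0: "Q $ 0 = 1" unfolding Q_def using P0 by simp
  have "Q ^ (m+1) * fps_deriv (fps_X * P) = Q ^ m * (Q * P) + fps_X * (Q ^ (m+1) * fps_deriv P)"
    by (simp add: algebra_simps)
  also have "\<dots> = Q ^ m + fps_X * (Q ^ (m+1) * fps_deriv P)" by (simp add: QP)
  finally have eq: "Q ^ (m+1) * fps_deriv (fps_X * P) = Q ^ m + fps_X * (Q ^ (m+1) * fps_deriv P)" .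
  show ?thesis
  proof (cases m)
    case 0 then show ?thesis using eq Q0 by (simp add: Q_def[symmetric])
  next
    case (Suc k)
    have dQ: "fps_deriv Q = - fps_deriv P * Q\<^sup>2"
      unfolding Q_def using P0 by (intro fps_inverse_deriv) simp
    have "fps_deriv (Q ^ m) = fps_const (of_nat m) * fps_deriv Q * Q ^ (m - 1)"
      by (rule fps_deriv_power)
    also have "\<dots> = - fps_const (of_nat m) * (Q ^ (m+1) * fps_deriv P)"
    proof -
      have pw: "Q ^ (m+1) = Q\<^sup>2 * Q ^ (m - 1)" using Suc by (simp add: power2_eq_square)
      show ?thesis unfolding dQ pw by algebra
    qed
    finally have d: "fps_deriv (Q ^ m) = - fps_const (of_nat m) * (Q ^ (m+1) * fps_deriv P)" .
    have "of_nat m * (Q ^ m $ m) = fps_deriv (Q ^ m) $ k" by (metis Suc Suc_eq_plus1 fps_deriv_nth)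
    also have "\<dots> = - of_nat m * ((Q ^ (m+1) * fps_deriv P) $ k)" by (simp add: d)
    finally have e: "of_nat m * (Q ^ m $ m) = of_nat m * (- ((Q ^ (m+1) * fps_deriv P) $ k))" by simp
    have "m \<noteq> 0" using Suc by simp
    then have "Q ^ m $ m = - ((Q ^ (m+1) * fps_deriv P) $ k)" using e by (metis mult_left_cancel of_nat_eq_0_iff)
    then show ?thesis using eq Suc by (simp add: Q_def[symmetric])
  qed
qed

lemma lagrange:
  fixes P :: "'a::field_char_0 fps"
  assumes P0: "P $ 0 = 1" and n: "n \<ge> 1"
  shows "of_nat n * fps_inv (fps_X * P) $ n = (inverse P ^ n) $ (n - 1)"
proof -
  define L where "L = fps_X * P"
  define g where "g = fps_inv L"
  define Q where "Q = inverse P"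
  have L0: "L $ 0 = 0" and L1: "L $ 1 \<noteq> 0" using P0 by (simp_all add: L_def)
  have gL: "g oo L = fps_X" unfolding g_def by (rule fps_inv[OF L0 L1])
  have QP: "Q * P = 1" unfolding Q_def using P0 by (intro inverse_mult_eq_1) simp
  define A where "A = (\<Sum>k=0..n. fps_const (g $ k) * L ^ k)"
  have A1: "A $ j = fps_X $ j" if "j \<le> n" for j
  proof -
    have "A $ j = (\<Sum>k=0..n. g $ k * (L ^ k $ j))" by (simp add: A_def fps_sum_nth)
    also have "\<dots> = (\<Sum>k=0..j. g $ k * (L ^ k $ j))"
      by (rule sum.mono_neutral_right) (use that startsby_zero_power_prefix[OF L0] in auto)
    also have "\<dots> = (g oo L) $ j" by (simp add: fps_compose_nth)
    finally show ?thesis by (simp add: gL)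
  qed
  have A2: "fps_deriv A $ j = (if j = 0 then 1 else 0)" if "j < n" for j
    using A1[of "j+1"] that by (simp add: fps_X_def)
  have "(Q ^ n * fps_deriv A) $ (n - 1) = (\<Sum>i=0..n-1. Q ^ n $ i * (fps_deriv A $ (n - 1 - i)))"
    by (simp add: fps_mult_nth)
  also have "\<dots> = (\<Sum>i=0..n-1. if i = n - 1 then Q ^ n $ i else 0)"
  proof (intro sum.cong refl)
    fix i assume i: "i \<in> {0..n-1}"
    then have "n - 1 - i < n" using n by auto
    then show "Q ^ n $ i * (fps_deriv A $ (n - 1 - i)) = (if i = n - 1 then Q ^ n $ i else 0)"
      using i A2[OF \<open>n - 1 - i < n\<close>] by auto
  qed
  also have "\<dots> = Q ^ n $ (n - 1)" by simp
  finally have s1: "(Q ^ n * fps_deriv A) $ (n - 1) = Q ^ n $ (n - 1)" .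
  have dA: "fps_deriv A = (\<Sum>k=0..n. fps_const (of_nat k * g $ k) * (L ^ (k - 1) * fps_deriv L))"
    unfolding A_def fps_deriv_sum
    by (intro sum.cong refl) (simp add: fps_deriv_power fps_const_mult mult_ac)
  have trm: "(Q ^ n * (L ^ (k - 1) * fps_deriv L)) $ (n - 1) = (if k = n then 1 else 0)"
    if k: "1 \<le> k" "k \<le> n" for k
  proof -
    have "(n - k + 1) + (k - 1) = n" using k by simp
    then have "Q ^ n = Q ^ (n - k + 1) * Q ^ (k - 1)" by (metis power_add)
    then have "Q ^ n * (L ^ (k - 1) * fps_deriv L)
       = fps_X ^ (k - 1) * ((Q * P) ^ (k - 1) * (Q ^ (n - k + 1) * fps_deriv L))"
      by (simp add: L_def power_mult_distrib algebra_simps)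
    also have "\<dots> = fps_X ^ (k - 1) * (Q ^ (n - k + 1) * fps_deriv L)" by (simp only: QP power_one mult_1_left)
    finally have eq: "Q ^ n * (L ^ (k - 1) * fps_deriv L) = fps_X ^ (k - 1) * (Q ^ (n - k + 1) * fps_deriv L)" .
    have "(Q ^ n * (L ^ (k - 1) * fps_deriv L)) $ (n - 1) = (Q ^ (n - k + 1) * fps_deriv L) $ (n - k)"
      unfolding eq fps_X_power_mult_nth using k by simp
    also have "\<dots> = (if n - k = 0 then 1 else 0)"
      using key_coeff[OF P0, of "n - k"] by (simp add: Q_def L_def)
    finally show ?thesis using k by auto
  qed
  have "(Q ^ n * fps_deriv A) $ (n - 1)
      = (\<Sum>k=0..n. g $ k * of_nat k * ((Q ^ n * (L ^ (k - 1) * fps_deriv L)) $ (n - 1)))"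
    unfolding dA sum_distrib_left fps_sum_nth
  proof (intro sum.cong refl)
    fix k
    have "Q ^ n * (fps_const (of_nat k * g $ k) * (L ^ (k - 1) * fps_deriv L))
        = fps_const (of_nat k * g $ k) * (Q ^ n * (L ^ (k - 1) * fps_deriv L))"
      by (simp only: mult.left_commute)
    then show "(Q ^ n * (fps_const (of_nat k * g $ k) * (L ^ (k - 1) * fps_deriv L))) $ (n - 1)
        = g $ k * of_nat k * ((Q ^ n * (L ^ (k - 1) * fps_deriv L)) $ (n - 1))"
      by (simp only: fps_mult_left_const_nth) (simp add: mult_ac)
  qed
  also have "\<dots> = (\<Sum>k=0..n. if k = n then g $ k * of_nat k else 0)"
  proof (intro sum.cong refl)
    fix k assume "k \<in> {0..n}"
    then show "g $ k * of_nat k * ((Q ^ n * (L ^ (k - 1) * fps_deriv L)) $ (n - 1)) = (if k = n then g $ k * of_nat k else 0)"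
      using trm[of k] n by (cases "k = 0") auto
  qed
  also have "\<dots> = g $ n * of_nat n" by simp
  finally show ?thesis using s1 by (simp add: g_def L_def Q_def mult.commute)
qed


lemma inv_pow_coeff:
  fixes W :: "'a::field_char_0 fps"
  assumes W0: "W $ 0 = 0"
  shows "(inverse (1 + W) ^ n) $ q = (\<Sum>i=0..q. ((- of_nat n) gchoose i) * (W ^ i $ q))"
proof -
  have P: "(1 + W) ^ n = (1 + fps_X) ^ n oo W"
    using W0 by (simp add: fps_compose_power[symmetric] fps_compose_add_distrib)
  have "(1 + W) ^ n * (fps_binomial (- of_nat n) oo W) = 1"
  proof -
    have "(1 + W) ^ n * (fps_binomial (- of_nat n) oo W)
        = (fps_binomial (of_nat n) * fps_binomial (- of_nat n)) oo W"
      by (simp add: P fps_binomial_of_nat fps_compose_mult_distrib[OF W0])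
    also have "\<dots> = 1" by (simp flip: fps_binomial_add_mult)
    finally show ?thesis .
  qed
  then have "inverse ((1 + W) ^ n) = fps_binomial (- of_nat n) oo W"
    by (rule fps_inverse_unique)
  then have "inverse (1 + W) ^ n = fps_binomial (- of_nat n) oo W"
    by (simp add: fps_inverse_power)
  then show ?thesis by (simp add: fps_compose_nth)
qed

definition fmap :: "'a::comm_ring_1 fps \<Rightarrow> 'a fps fps" where
  "fmap B = Abs_fps (\<lambda>n. fps_const (B $ n))"

lemma fmap_nth[simp]: "fmap B $ n = fps_const (B $ n)"
  by (simp add: fmap_def)

lemma fps_const_sum: "fps_const (sum f A) = (\<Sum>x\<in>A. fps_const (f x))"
  by (induction A rule: infinite_finite_induct) (simp_all flip: fps_const_add)

lemma fmap_mult: "fmap (A * B) = fmap A * fmap B"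
  by (rule fps_ext) (simp add: fps_mult_nth fps_const_sum[symmetric] fps_const_mult)

lemma fmap_one: "fmap 1 = 1"
  by (rule fps_ext) (simp add: fps_one_nth)

lemma fmap_pow: "fmap (A ^ k) = fmap A ^ k"
  by (induction k) (simp_all add: fmap_one fmap_mult)

lemma emb_log_sum: "emb (log_sum p l) = fps_const (Lf p l) + fmap (Lf p l)"
  by (rule fps_ext, rule fps_ext) (simp add: log_sum_def Lf_nth)

lemma bs_pow_log_sum:
  "bs_pow (log_sum p l) n i j = (\<Sum>a\<le>n. of_nat (n choose a) * (Lf p l ^ a $ i) * (Lf p l ^ (n - a) $ j))"
proof -
  let ?L = "Lf p l"
  have "bs_pow (log_sum p l) n i j = emb (bs_pow (log_sum p l) n) $ j $ i" by simp
  also have "emb (bs_pow (log_sum p l) n) = (fps_const ?L + fmap ?L) ^ n"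
    by (simp add: emb_pow emb_log_sum)
  also have "\<dots> = (\<Sum>a\<le>n. of_nat (n choose a) * fps_const ?L ^ a * fmap ?L ^ (n - a))"
    by (rule binomial_ring)
  also have "\<dots> = (\<Sum>a\<le>n. fps_const (fps_const (of_nat (n choose a)) * ?L ^ a) * fmap (?L ^ (n - a)))"
    by (simp add: fmap_pow fps_const_power flip: fps_of_nat)
  also have "\<dots> $ j $ i = (\<Sum>a\<le>n. of_nat (n choose a) * (?L ^ a $ i) * (?L ^ (n - a) $ j))"
    by (simp add: fps_sum_nth)
  finally show ?thesis .
qed


definition comps :: "'b set \<Rightarrow> nat \<Rightarrow> ('b \<Rightarrow> nat) set" where
  "comps A m = {k. (\<forall>r. r \<notin> A \<longrightarrow> k r = 0) \<and> (\<Sum>r\<in>A. k r) = m}"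

definition mnom :: "'b set \<Rightarrow> ('b \<Rightarrow> nat) \<Rightarrow> nat" where
  "mnom A k = fact (\<Sum>r\<in>A. k r) div (\<Prod>r\<in>A. fact (k r))"

lemma prod_fact_dvd: "finite A \<Longrightarrow> (\<Prod>r\<in>A. fact (k r)) dvd (fact (\<Sum>r\<in>A. k r) :: nat)"
proof (induction A rule: finite_induct)
  case (insert a A)
  have "(\<Prod>r\<in>insert a A. fact (k r)) = fact (k a) * (\<Prod>r\<in>A. fact (k r))"
    using insert by simp
  also have "\<dots> dvd fact (k a) * (fact (\<Sum>r\<in>A. k r) :: nat)"
    by (intro mult_dvd_mono dvd_refl insert.IH)
  also have "\<dots> dvd (fact (k a + (\<Sum>r\<in>A. k r)) :: nat)" by (rule fact_fact_dvd_fact)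
  finally show ?case using insert by simp
qed simp

lemma mnom_mult: "finite A \<Longrightarrow> (\<Prod>r\<in>A. fact (k r)) * mnom A k = fact (\<Sum>r\<in>A. k r)"
  unfolding mnom_def by (rule dvd_mult_div_cancel[OF prod_fact_dvd])

lemma finite_comps: "finite A \<Longrightarrow> finite (comps A m)"
proof -
  assume fA: "finite A"
  have "comps A m \<subseteq> {f. \<forall>x. (x \<in> A \<longrightarrow> f x \<in> {..m}) \<and> (x \<notin> A \<longrightarrow> f x = 0)}"
  proof
    fix k assume k: "k \<in> comps A m"
    have "k x \<le> m" if "x \<in> A" for x
    proof -
      have "k x \<le> (\<Sum>r\<in>A. k r)" using fA that by (intro member_le_sum) auto
      then show ?thesis using k by (auto simp: comps_def)
    qed
    then show "k \<in> {f. \<forall>x. (x \<in> A \<longrightarrow> f x \<in> {..m}) \<and> (x \<notin> A \<longrightarrow> f x = 0)}"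
      using k by (auto simp: comps_def)
  qed
  then show ?thesis by (rule finite_subset) (intro finite_set_of_finite_funs fA finite_atMost)
qed

lemma sum_upd_out: "a \<notin> A \<Longrightarrow> (\<Sum>r\<in>A. f ((k(a := j)) r) r) = (\<Sum>r\<in>A. f (k r) r)"
  by (rule sum.cong) auto

lemma prod_upd_out: "a \<notin> A \<Longrightarrow> (\<Prod>r\<in>A. f ((k(a := j)) r) r) = (\<Prod>r\<in>A. f (k r) r)"
  by (rule prod.cong) auto

lemma sum_upd_out': "a \<notin> A \<Longrightarrow> (\<Sum>r\<in>A. (k(a := j)) r) = (\<Sum>r\<in>A. k r)"
  by (rule sum.cong) auto

lemma prod_fact_upd_out: "a \<notin> A \<Longrightarrow> (\<Prod>r\<in>A. fact ((k(a := j)) r)) = (\<Prod>r\<in>A. fact (k r))"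
  by (rule prod.cong) auto

lemma prod_pow_upd_out: "a \<notin> A \<Longrightarrow> (\<Prod>r\<in>A. z r ^ ((k(a := j)) r)) = (\<Prod>r\<in>A. z r ^ k r)"
  by (rule prod.cong) auto

lemma mnom_insert:
  assumes fA: "finite A" and a: "a \<notin> A" and k: "k \<in> comps A (m - j)" and j: "j \<le> m"
  shows "mnom (insert a A) (k(a := j)) = (m choose j) * mnom A k"
proof -
  have ka: "k a = 0" using k a by (auto simp: comps_def)
  have sA: "(\<Sum>r\<in>A. k r) = m - j" using k by (simp add: comps_def)
  have eqA: "\<And>r. r \<in> A \<Longrightarrow> (k(a := j)) r = k r" using a by auto
  have s: "(\<Sum>r\<in>insert a A. (k(a := j)) r) = m"
    using fA a j sA by (simp only: sum.insert[OF fA a] fun_upd_same sum_upd_out'[OF a])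
  have pr: "(\<Prod>r\<in>insert a A. fact ((k(a := j)) r)) = fact j * (\<Prod>r\<in>A. fact (k r))"
    by (simp only: prod.insert[OF fA a] fun_upd_same prod_fact_upd_out[OF a])
  have "fact j * (\<Prod>r\<in>A. fact (k r)) * mnom (insert a A) (k(a := j)) = (fact m :: nat)"
    using mnom_mult[of "insert a A" "k(a := j)"] fA s pr by (metis finite_insert)
  also have "\<dots> = fact j * fact (m - j) * (m choose j)" using binomial_fact_lemma[OF j] by simp
  also have "\<dots> = fact j * ((\<Prod>r\<in>A. fact (k r)) * mnom A k) * (m choose j)"
    using mnom_mult[OF fA, of k] sA by simp
  finally have "(fact j * (\<Prod>r\<in>A. fact (k r))) * mnom (insert a A) (k(a := j))
      = (fact j * (\<Prod>r\<in>A. fact (k r))) * ((m choose j) * mnom A k)"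
    by (simp add: ac_simps)
  moreover have "fact j * (\<Prod>r\<in>A. fact (k r)) \<noteq> (0::nat)"
    by (simp add: prod_pos)
  ultimately show ?thesis by simp
qed

theorem multinomial:
  fixes z :: "'b \<Rightarrow> 'c::comm_semiring_1"
  assumes "finite A"
  shows "(\<Sum>r\<in>A. z r) ^ m = (\<Sum>k\<in>comps A m. of_nat (mnom A k) * (\<Prod>r\<in>A. z r ^ k r))"
  using assms
proof (induction A arbitrary: m rule: finite_induct)
  case empty
  have c0: "comps {} 0 = {\<lambda>_. 0}" by (auto simp: comps_def)
  have cS: "comps {} (Suc n) = {}" for n by (auto simp: comps_def)
  show ?case by (cases m) (simp_all add: mnom_def c0 cS)
next
  case (insert a A)
  note fA = insert.hyps(1) and a = insert.hyps(2)
  have "(\<Sum>r\<in>insert a A. z r) ^ m = (z a + (\<Sum>r\<in>A. z r)) ^ m" using fA a by simp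
  also have "\<dots> = (\<Sum>j\<le>m. of_nat (m choose j) * z a ^ j * (\<Sum>r\<in>A. z r) ^ (m - j))"
    by (rule binomial_ring)
  also have "\<dots> = (\<Sum>j\<le>m. \<Sum>k\<in>comps A (m - j).
      of_nat (m choose j) * z a ^ j * (of_nat (mnom A k) * (\<Prod>r\<in>A. z r ^ k r)))"
    by (simp add: insert.IH sum_distrib_left)
  also have "\<dots> = (\<Sum>(j,k)\<in>(SIGMA j:{..m}. comps A (m - j)).
      of_nat (m choose j) * z a ^ j * (of_nat (mnom A k) * (\<Prod>r\<in>A. z r ^ k r)))"
    by (rule sum.Sigma) (auto intro: finite_comps fA)
  also have "\<dots> = (\<Sum>k\<in>comps (insert a A) m. of_nat (mnom (insert a A) k) * (\<Prod>r\<in>insert a A. z r ^ k r))"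
  proof (rule sum.reindex_bij_witness[where i = "\<lambda>k. (k a, k(a := 0))" and j = "\<lambda>(j, k). k(a := j)"])
    fix jk assume jk: "jk \<in> (SIGMA j:{..m}. comps A (m - j))"
    obtain j k where jk_eq: "jk = (j, k)" by (cases jk)
    have j: "j \<le> m" and k: "k \<in> comps A (m - j)" using jk jk_eq by auto
    have ka: "k a = 0" using k a by (auto simp: comps_def)
    have eqA: "\<And>r. r \<in> A \<Longrightarrow> (k(a := j)) r = k r" using a by auto
    show "(\<lambda>k. (k a, k(a := 0))) (case jk of (j, k) \<Rightarrow> k(a := j)) = jk"
      using ka jk_eq by (auto simp: fun_eq_iff)
    have sA: "(\<Sum>r\<in>A. k r) = m - j" using k by (simp add: comps_def)
    show "(case jk of (j, k) \<Rightarrow> k(a := j)) \<in> comps (insert a A) m"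
      using jk_eq k j fA a sA by (auto simp: comps_def sum.insert[OF fA a] sum_upd_out'[OF a] fun_upd_same fun_upd_other simp del: fun_upd_apply)
    have pr: "(\<Prod>r\<in>insert a A. z r ^ (k(a := j)) r) = z a ^ j * (\<Prod>r\<in>A. z r ^ k r)"
      by (simp only: prod.insert[OF fA a] fun_upd_same prod_pow_upd_out[OF a])
    show "of_nat (mnom (insert a A) (case jk of (j, k) \<Rightarrow> k(a := j))) *
          (\<Prod>r\<in>insert a A. z r ^ (case jk of (j, k) \<Rightarrow> k(a := j)) r) =
          (case jk of (j, k) \<Rightarrow> of_nat (m choose j) * z a ^ j * (of_nat (mnom A k) * (\<Prod>r\<in>A. z r ^ k r)))"
      using jk_eq mnom_insert[OF fA a k j] pr by (simp add: ac_simps)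
  next
    fix k assume k: "k \<in> comps (insert a A) m"
    show "(case (k a, k(a := 0)) of (j, k) \<Rightarrow> k(a := j)) = k" by simp
    have s: "k a + (\<Sum>r\<in>A. k r) = m" using k fA a by (simp add: comps_def)
    have eqA: "\<And>r. r \<in> A \<Longrightarrow> (k(a := 0)) r = k r" using a by auto
    show "(k a, k(a := 0)) \<in> (SIGMA j:{..m}. comps A (m - j))"
    proof -
      have "\<forall>r. r \<notin> A \<longrightarrow> (k(a:=0)) r = 0" using k by (auto simp: comps_def)
      moreover have "(\<Sum>r\<in>A. (k(a:=0)) r) = m - k a" by (subst sum_upd_out'[OF a]) (use s in simp)
      moreover have "k a \<le> m" using s by simp
      ultimately show ?thesis by (simp add: comps_def)
    qed
  qed
  finally show ?case .
qed


lemma fps_const_prod: "fps_const (prod f A) = (\<Prod>x\<in>A. fps_const (f x))"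
  by (induction A rule: infinite_finite_induct) (simp_all flip: fps_const_mult)

lemma fps_multinom_nth:
  fixes c :: "'b \<Rightarrow> 'a::comm_ring_1"
  assumes fA: "finite A"
  shows "(\<Sum>r\<in>A. fps_const (c r) * fps_X ^ e r) ^ m $ q =
    (\<Sum>k\<in>{k\<in>comps A m. (\<Sum>r\<in>A. k r * e r) = q}. of_nat (mnom A k) * (\<Prod>r\<in>A. c r ^ k r))"
proof -
  have pr: "(\<Prod>r\<in>A. (fps_const (c r) * fps_X ^ e r) ^ k r)
      = fps_const (\<Prod>r\<in>A. c r ^ k r) * fps_X ^ (\<Sum>r\<in>A. k r * e r)" for k
    by (simp add: power_mult_distrib prod.distrib fps_const_prod power_sum power_mult mult.commute)
  have "(\<Sum>r\<in>A. fps_const (c r) * fps_X ^ e r) ^ m $ q =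
      (\<Sum>k\<in>comps A m. of_nat (mnom A k) * (if q = (\<Sum>r\<in>A. k r * e r) then (\<Prod>r\<in>A. c r ^ k r) else 0))"
    by (simp add: multinomial[OF fA] pr fps_sum_nth fps_of_nat[symmetric] if1_mult' del: fps_const_power)
  also have "\<dots> = (\<Sum>k\<in>comps A m. if (\<Sum>r\<in>A. k r * e r) = q then of_nat (mnom A k) * (\<Prod>r\<in>A. c r ^ k r) else 0)"
    by (intro sum.cong refl) auto
  also have "\<dots> = (\<Sum>k\<in>{k\<in>comps A m. (\<Sum>r\<in>A. k r * e r) = q}. of_nat (mnom A k) * (\<Prod>r\<in>A. c r ^ k r))"
    by (rule sum.inter_filter[symmetric]) (rule finite_comps[OF fA])
  finally show ?thesis .
qed

lemma pow_agree:
  assumes "\<And>k. k \<le> N \<Longrightarrow> A $ k = B $ k" "q \<le> N"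
  shows "(A ^ m) $ q = (B ^ m) $ q"
  using assms(2)
proof (induction m arbitrary: q)
  case (Suc m)
  then show ?case using assms(1) by (simp add: fps_mult_nth)
qed simp


definition c0 :: "(nat \<Rightarrow> 'a::comm_ring_1) \<Rightarrow> nat \<Rightarrow> 'a" where
  "c0 l r = (if r = 0 then 1 else l r)"

definition LR :: "nat \<Rightarrow> (nat \<Rightarrow> 'a::comm_ring_1) \<Rightarrow> nat \<Rightarrow> 'a fps" where
  "LR p l R = (\<Sum>r\<in>{0..R}. fps_const (c0 l r) * fps_X ^ (p ^ r))"

definition Wf :: "nat \<Rightarrow> (nat \<Rightarrow> 'a::comm_ring_1) \<Rightarrow> 'a fps" where
  "Wf p l = Abs_fps (\<lambda>k. if k = 0 then 0 else log_coeff p l (Suc k))"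

definition WR :: "nat \<Rightarrow> (nat \<Rightarrow> 'a::comm_ring_1) \<Rightarrow> nat \<Rightarrow> 'a fps" where
  "WR p l R = (\<Sum>r\<in>{1..R}. fps_const (l r) * fps_X ^ (p ^ r - 1))"

lemma pow_inj: "p \<ge> (2::nat) \<Longrightarrow> p ^ r = p ^ s \<longleftrightarrow> r = s"
  by (simp add: power_inject_exp)

lemma LR_agree:
  assumes p2: "p \<ge> 2" and q: "q \<le> R"
  shows "LR p l R $ q = Lf p l $ q"
proof -
  have s: "LR p l R $ q = (\<Sum>r\<in>{0..R}. if q = p ^ r then c0 l r else 0)"
    by (simp add: LR_def fps_sum_nth if1_mult')
  show ?thesis
  proof (cases "\<exists>r0\<in>{0..R}. q = p ^ r0")
    case True
    then obtain r0 where r0: "r0 \<in> {0..R}" "q = p ^ r0" by blast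
    have "LR p l R $ q = (\<Sum>r\<in>{0..R}. if r = r0 then c0 l r else 0)"
      unfolding s using r0 pow_inj[OF p2] by (intro sum.cong refl) auto
    also have "\<dots> = c0 l r0" using r0 by simp
    also have "\<dots> = log_coeff p l q"
      using r0 p2 by (cases "r0 = 0") (simp_all add: c0_def log_coeff_Suc0 log_coeff_pow)
    finally show ?thesis by (simp add: Lf_nth)
  next
    case False
    have "LR p l R $ q = 0" unfolding s using False by (intro sum.neutral) auto
    moreover have "log_coeff p l q = 0"
    proof (rule log_coeff_other)
      show "q \<noteq> 1" using False by force
      fix r :: nat assume r: "r \<ge> 1"
      show "q \<noteq> p ^ r"
      proof
        assume qr: "q = p ^ r"
        then have "r \<le> R" using q r_less_pow[OF p2, of r] by simp
        then show False using False qr by auto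
      qed
    qed
    ultimately show ?thesis by (simp add: Lf_nth)
  qed
qed

lemma WR_agree:
  assumes p2: "p \<ge> 2" and q: "q < R"
  shows "WR p l R $ q = Wf p l $ q"
proof -
  have s: "WR p l R $ q = (\<Sum>r\<in>{1..R}. if q = p ^ r - 1 then l r else 0)"
    by (simp add: WR_def fps_sum_nth if1_mult')
  have pos: "p ^ r \<ge> 1" for r using p2 by simp
  show ?thesis
  proof (cases "q = 0")
    case True
    have ne: "q \<noteq> p ^ r - 1" if "r \<ge> 1" for r using one_less_power[of p r] p2 that True by auto
    have "WR p l R $ q = 0" unfolding s using ne by (intro sum.neutral) auto
    then show ?thesis using True by (simp add: Wf_def)
  next
    case q0: False
    show ?thesis
    proof (cases "\<exists>r0\<in>{1..R}. Suc q = p ^ r0")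
      case True
      then obtain r0 where r0: "r0 \<in> {1..R}" "Suc q = p ^ r0" by blast
      have "WR p l R $ q = (\<Sum>r\<in>{1..R}. if r = r0 then l r else 0)"
        unfolding s
      proof (intro sum.cong refl)
        fix r assume "r \<in> {1..R}"
        have "q = p ^ r - 1 \<longleftrightarrow> Suc q = p ^ r" using pos[of r] by arith
        also have "\<dots> \<longleftrightarrow> r = r0" using r0(2) pow_inj[OF p2, of r0 r] by auto
        finally show "(if q = p ^ r - 1 then l r else 0) = (if r = r0 then l r else 0)" by simp
      qed
      also have "\<dots> = l r0" using r0 by simp
      also have "\<dots> = log_coeff p l (Suc q)" using r0 p2 by (simp add: log_coeff_pow)
      finally show ?thesis using q0 by (simp add: Wf_def)
    next
      case False
      have "WR p l R $ q = 0" unfolding s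
      proof (intro sum.neutral ballI)
        fix r assume r: "r \<in> {1..R}"
        have "q = p ^ r - 1 \<longleftrightarrow> Suc q = p ^ r" using pos[of r] by arith
        then show "(if q = p ^ r - 1 then l r else 0) = 0" using False r by auto
      qed
      moreover have "log_coeff p l (Suc q) = 0"
      proof (rule log_coeff_other)
        show "Suc q \<noteq> 1" using q0 by simp
        fix r :: nat assume r: "r \<ge> 1"
        show "Suc q \<noteq> p ^ r"
        proof
          assume qr: "Suc q = p ^ r"
          then have "r \<le> R" using q r_less_pow[OF p2, of r] by simp
          then show False using False qr r by auto
        qed
      qed
      ultimately show ?thesis using q0 by (simp add: Wf_def)
    qed
  qed
qed

lemma Lf_eq:
  assumes "p \<ge> 2" shows "Lf p l = fps_X * (1 + Wf p l)"
proof (rule fps_ext)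
  fix n
  show "Lf p l $ n = (fps_X * (1 + Wf p l)) $ n"
  proof (cases n)
    case 0 then show ?thesis using assms by (simp add: Lf_nth log_coeff_0)
  next
    case (Suc k)
    then show ?thesis by (cases k) (simp_all add: Lf_nth Wf_def log_coeff_Suc0)
  qed
qed

lemma Wf_0: "Wf p l $ 0 = 0"
  by (simp add: Wf_def)


lemma sum_group_eq:
  assumes "finite S" "finite T" "g ` S \<subseteq> T" "\<And>y. y \<in> T \<Longrightarrow> B y = {x\<in>S. g x = y}"
  shows "(\<Sum>y\<in>T. \<Sum>x\<in>B y. f y x) = (\<Sum>x\<in>S. f (g x) x)"
proof -
  have "(\<Sum>y\<in>T. \<Sum>x\<in>B y. f y x) = (\<Sum>y\<in>T. \<Sum>x\<in>{x\<in>S. g x = y}. f (g x) x)"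
    by (intro sum.cong refl) (auto simp: assms(4))
  also have "\<dots> = (\<Sum>x\<in>S. f (g x) x)" by (rule sum.group[OF assms(1,2,3)])
  finally show ?thesis .
qed

definition Fs :: "nat set \<Rightarrow> (nat \<Rightarrow> nat) set" where
  "Fs A = {k. \<forall>r. r \<notin> A \<longrightarrow> k r = 0}"

definition tot :: "nat \<Rightarrow> (nat \<Rightarrow> nat) \<Rightarrow> nat" where
  "tot R k = (\<Sum>r\<in>{0..R}. k r)"

definition totK :: "nat \<Rightarrow> (nat \<Rightarrow> nat) \<Rightarrow> nat" where
  "totK R K = (\<Sum>r\<in>{1..R}. K r)"

definition KS :: "nat \<Rightarrow> nat \<Rightarrow> nat \<Rightarrow> (nat \<Rightarrow> nat) set" where
  "KS p R n = {K \<in> Fs {1..R}. (\<Sum>r\<in>{1..R}. K r * (p ^ r - 1)) = n - 1}"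

definition IS :: "nat \<Rightarrow> nat \<Rightarrow> nat \<Rightarrow> (nat \<Rightarrow> nat) set" where
  "IS p R q = {k \<in> Fs {0..R}. (\<Sum>r\<in>{0..R}. k r * p ^ r) = q}"

definition VS :: "nat \<Rightarrow> nat \<Rightarrow> nat \<Rightarrow> nat \<Rightarrow> nat \<Rightarrow> ((nat \<Rightarrow> nat) \<times> (nat \<Rightarrow> nat)) set" where
  "VS p R i j n = {(k1, k2). k1 \<in> IS p R i \<and> k2 \<in> IS p R j \<and> tot R k1 + tot R k2 = n}"

lemma finite_bounded_funs: "finite A \<Longrightarrow> finite {f::nat\<Rightarrow>nat. \<forall>x. (x \<in> A \<longrightarrow> f x \<le> b) \<and> (x \<notin> A \<longrightarrow> f x = 0)}"
  using finite_set_of_finite_funs[of A "{..b}" 0] by simp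

lemma le_sum_term: "finite A \<Longrightarrow> x \<in> A \<Longrightarrow> (f x :: nat) \<le> (\<Sum>r\<in>A. f r)"
  by (rule member_le_sum) auto

lemma finite_IS: "p \<ge> 2 \<Longrightarrow> finite (IS p R q)"
proof -
  assume p2: "p \<ge> 2"
  have "IS p R q \<subseteq> {f. \<forall>x. (x \<in> {0..R} \<longrightarrow> f x \<le> q) \<and> (x \<notin> {0..R} \<longrightarrow> f x = 0)}"
  proof (safe)
    fix k x assume k: "k \<in> IS p R q" and x: "x \<in> {0..R}"
    have "k x \<le> k x * p ^ x" using p2 by simp
    also have "\<dots> \<le> (\<Sum>r\<in>{0..R}. k r * p ^ r)" using x by (intro le_sum_term) auto
    finally show "k x \<le> q" using k by (simp add: IS_def)
  qed (auto simp: IS_def Fs_def)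
  then show ?thesis by (rule finite_subset) (rule finite_bounded_funs, simp)
qed

lemma pr_ge1: "p \<ge> 2 \<Longrightarrow> r \<ge> 1 \<Longrightarrow> p ^ r - 1 \<ge> (1::nat)"
  using one_less_power[of p r] by simp

lemma totK_le: "p \<ge> 2 \<Longrightarrow> totK R K \<le> (\<Sum>r\<in>{1..R}. K r * (p ^ r - 1))"
  unfolding totK_def
proof (intro sum_mono)
  fix r assume p2: "p \<ge> 2" and "r \<in> {1..R}"
  then have h: "1 \<le> p ^ r - 1" using pr_ge1[OF p2, of r] by simp
  show "K r \<le> K r * (p ^ r - 1)" using mult_le_mono2[OF h, of "K r"] by simp
qed

lemma finite_KS: "p \<ge> 2 \<Longrightarrow> finite (KS p R n)"
proof -
  assume p2: "p \<ge> 2"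
  have "KS p R n \<subseteq> {f. \<forall>x. (x \<in> {1..R} \<longrightarrow> f x \<le> n) \<and> (x \<notin> {1..R} \<longrightarrow> f x = 0)}"
  proof (safe)
    fix K x assume K: "K \<in> KS p R n" and x: "x \<in> {1..R}"
    have "K x \<le> K x * (p ^ x - 1)" using p2 x pr_ge1[OF p2, of x] by simp
    also have "\<dots> \<le> (\<Sum>r\<in>{1..R}. K r * (p ^ r - 1))" using x by (intro le_sum_term) auto
    finally show "K x \<le> n" using K by (simp add: KS_def)
  qed (auto simp: KS_def Fs_def)
  then show ?thesis by (rule finite_subset) (rule finite_bounded_funs, simp)
qed

lemma finite_VS: "p \<ge> 2 \<Longrightarrow> finite (VS p R i j n)"
proof -
  assume p2: "p \<ge> 2"
  have "VS p R i j n \<subseteq> IS p R i \<times> IS p R j" by (auto simp: VS_def)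
  then show ?thesis by (rule finite_subset) (simp add: finite_IS[OF p2])
qed

lemma g_formula:
  fixes l :: "nat \<Rightarrow> 'a::field_char_0"
  assumes p2: "p \<ge> 2" and n: "1 \<le> n" "n \<le> R"
  shows "fps_inv (Lf p l) $ n = (1 / of_nat n) *
    (\<Sum>K\<in>KS p R n. ((- of_nat n) gchoose totK R K) * (of_nat (mnom {1..R} K) * (\<Prod>r\<in>{1..R}. l r ^ K r)))"
proof -
  let ?W = "Wf p l"
  have "of_nat n * fps_inv (Lf p l) $ n = (inverse (1 + ?W) ^ n) $ (n - 1)"
    using lagrange[of "1 + ?W" n] n by (simp add: Lf_eq[OF p2] Wf_0)
  also have "\<dots> = (\<Sum>m=0..n-1. ((- of_nat n) gchoose m) * (?W ^ m $ (n - 1)))"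
    by (rule inv_pow_coeff) (simp add: Wf_0)
  also have "\<dots> = (\<Sum>m=0..n-1. ((- of_nat n) gchoose m) *
       (\<Sum>K\<in>{K\<in>KS p R n. totK R K = m}. of_nat (mnom {1..R} K) * (\<Prod>r\<in>{1..R}. l r ^ K r)))"
  proof (intro sum.cong refl arg_cong2[where f="(*)"])
    fix m
    have "?W ^ m $ (n - 1) = WR p l R ^ m $ (n - 1)"
    proof (rule pow_agree[where N="R - 1"])
      fix k assume "k \<le> R - 1"
      then have "k < R" using n by simp
      then show "?W $ k = WR p l R $ k" by (rule WR_agree[OF p2, symmetric])
    qed (use n in simp)
    also have "\<dots> = (\<Sum>K\<in>{K\<in>comps {1..R} m. (\<Sum>r\<in>{1..R}. K r * (p ^ r - 1)) = n - 1}.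
        of_nat (mnom {1..R} K) * (\<Prod>r\<in>{1..R}. l r ^ K r))"
      unfolding WR_def by (rule fps_multinom_nth) simp
    also have "{K\<in>comps {1..R} m. (\<Sum>r\<in>{1..R}. K r * (p ^ r - 1)) = n - 1} = {K\<in>KS p R n. totK R K = m}"
      by (auto simp: comps_def KS_def Fs_def totK_def)
    finally show "?W ^ m $ (n - 1) = (\<Sum>K\<in>{K\<in>KS p R n. totK R K = m}. of_nat (mnom {1..R} K) * (\<Prod>r\<in>{1..R}. l r ^ K r))" .
  qed
  also have "\<dots> = (\<Sum>m=0..n-1. \<Sum>K\<in>{K\<in>KS p R n. totK R K = m}.
       ((- of_nat n) gchoose m) * (of_nat (mnom {1..R} K) * (\<Prod>r\<in>{1..R}. l r ^ K r)))"
    by (simp add: sum_distrib_left)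
  also have "\<dots> = (\<Sum>K\<in>KS p R n. ((- of_nat n) gchoose totK R K) * (of_nat (mnom {1..R} K) * (\<Prod>r\<in>{1..R}. l r ^ K r)))"
  proof (rule sum_group_eq)
    show "finite (KS p R n)" by (rule finite_KS[OF p2])
    show "totK R ` KS p R n \<subseteq> {0..n - 1}"
    proof
      fix x assume "x \<in> totK R ` KS p R n"
      then obtain K where K: "K \<in> KS p R n" "x = totK R K" by blast
      show "x \<in> {0..n - 1}" using totK_le[OF p2, of R K] K by (simp add: KS_def)
    qed
  qed auto
  finally show ?thesis using n by (simp add: field_simps)
qed

lemma prod_sums: "(c::'a::comm_semiring_1) * sum f A * sum g B = (\<Sum>x\<in>A\<times>B. c * (f (fst x) * g (snd x)))"
proof -
  have "c * sum f A * sum g B = (\<Sum>x\<in>A. \<Sum>y\<in>B. c * (f x * g y))"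
    by (simp add: sum_product sum_distrib_left mult_ac)
  also have "\<dots> = (\<Sum>(x,y)\<in>A\<times>B. c * (f x * g y))" by (rule sum.cartesian_product)
  finally show ?thesis by (simp add: case_prod_beta)
qed

definition Mk :: "(nat \<Rightarrow> 'a::comm_ring_1) \<Rightarrow> nat \<Rightarrow> (nat \<Rightarrow> nat) \<Rightarrow> 'a" where
  "Mk l R k = of_nat (mnom {0..R} k) * (\<Prod>r\<in>{0..R}. c0 l r ^ k r)"

lemma Lpow_coeff:
  assumes p2: "p \<ge> 2" and q: "q \<le> R"
  shows "Lf p l ^ a $ q = (\<Sum>k\<in>{k\<in>IS p R q. tot R k = a}. Mk l R k)"
proof -
  have "Lf p l ^ a $ q = LR p l R ^ a $ q"
  proof (rule pow_agree[where N=R])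
    fix k assume "k \<le> R"
    then show "Lf p l $ k = LR p l R $ k" by (rule LR_agree[OF p2, symmetric])
  qed (use q in simp)
  also have "\<dots> = (\<Sum>k\<in>{k\<in>comps {0..R} a. (\<Sum>r\<in>{0..R}. k r * p ^ r) = q}. Mk l R k)"
    unfolding LR_def Mk_def by (rule fps_multinom_nth) simp
  also have "{k\<in>comps {0..R} a. (\<Sum>r\<in>{0..R}. k r * p ^ r) = q} = {k\<in>IS p R q. tot R k = a}"
    by (auto simp: comps_def IS_def Fs_def tot_def)
  finally show ?thesis .
qed

lemma bs_formula:
  fixes l :: "nat \<Rightarrow> 'a::field_char_0"
  assumes p2: "p \<ge> 2" and iR: "i \<le> R" and jR: "j \<le> R"
  shows "bs_pow (log_sum p l) n i j =
    (\<Sum>x\<in>VS p R i j n. of_nat (n choose tot R (fst x)) * (Mk l R (fst x) * Mk l R (snd x)))"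
proof -
  have "bs_pow (log_sum p l) n i j = (\<Sum>a\<le>n. of_nat (n choose a) * (Lf p l ^ a $ i) * (Lf p l ^ (n - a) $ j))"
    by (rule bs_pow_log_sum)
  also have "\<dots> = (\<Sum>a\<le>n. \<Sum>x\<in>{k\<in>IS p R i. tot R k = a} \<times> {k\<in>IS p R j. tot R k = n - a}.
      of_nat (n choose a) * (Mk l R (fst x) * Mk l R (snd x)))"
    by (simp only: Lpow_coeff[OF p2 iR] Lpow_coeff[OF p2 jR] prod_sums)
  also have "\<dots> = (\<Sum>x\<in>VS p R i j n. of_nat (n choose tot R (fst x)) * (Mk l R (fst x) * Mk l R (snd x)))"
  proof (rule sum_group_eq[where g="\<lambda>x. tot R (fst x)"])
    show "finite (VS p R i j n)" by (rule finite_VS[OF p2])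
    show "(\<lambda>x. tot R (fst x)) ` VS p R i j n \<subseteq> {..n}" by (auto simp: VS_def)
    fix a assume "a \<in> {..n}"
    then show "{k\<in>IS p R i. tot R k = a} \<times> {k\<in>IS p R j. tot R k = n - a} = {x\<in>VS p R i j n. tot R (fst x) = a}"
      by (auto simp: VS_def)
  qed auto
  finally show ?thesis .
qed


definition nN :: "nat \<Rightarrow> ((nat \<Rightarrow> nat) \<times> (nat \<Rightarrow> nat) \<times> (nat \<Rightarrow> nat)) \<Rightarrow> nat" where
  "nN R x = tot R (fst (snd x)) + tot R (snd (snd x))"

definition US :: "nat \<Rightarrow> nat \<Rightarrow> nat \<Rightarrow> nat \<Rightarrow> ((nat \<Rightarrow> nat) \<times> (nat \<Rightarrow> nat) \<times> (nat \<Rightarrow> nat)) set" where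
  "US p R i j = {x. 1 \<le> nN R x \<and> fst x \<in> KS p R (nN R x) \<and> fst (snd x) \<in> IS p R i \<and> snd (snd x) \<in> IS p R j}"

definition MK :: "(nat \<Rightarrow> 'a::comm_ring_1) \<Rightarrow> nat \<Rightarrow> (nat \<Rightarrow> nat) \<Rightarrow> 'a" where
  "MK l R K = of_nat (mnom {1..R} K) * (\<Prod>r\<in>{1..R}. l r ^ K r)"

definition psi :: "(nat \<Rightarrow> 'a::field_char_0) \<Rightarrow> nat \<Rightarrow> nat \<Rightarrow> ((nat \<Rightarrow> nat) \<times> (nat \<Rightarrow> nat) \<times> (nat \<Rightarrow> nat)) \<Rightarrow> 'a" where
  "psi l R n x = (1 / of_nat n) * (((- of_nat n) gchoose totK R (fst x)) * MK l R (fst x)) *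
     (of_nat (n choose tot R (fst (snd x))) * (Mk l R (fst (snd x)) * Mk l R (snd (snd x))))"

lemma tot_le_IS:
  assumes p2: "p \<ge> 2" and k: "k \<in> IS p R q" shows "tot R k \<le> q"
proof -
  have "tot R k \<le> (\<Sum>r\<in>{0..R}. k r * p ^ r)"
    unfolding tot_def using p2 by (intro sum_mono) simp
  then show ?thesis using k by (simp add: IS_def)
qed

lemma nN_le_US: "p \<ge> 2 \<Longrightarrow> x \<in> US p R i j \<Longrightarrow> nN R x \<le> i + j"
  unfolding nN_def US_def using tot_le_IS by (blast intro: add_mono)

lemma finite_US: "p \<ge> 2 \<Longrightarrow> finite (US p R i j)"
proof -
  assume p2: "p \<ge> 2"
  have "US p R i j \<subseteq> (\<Union>n\<in>{..i+j}. KS p R n) \<times> IS p R i \<times> IS p R j"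
  proof
    fix x assume x: "x \<in> US p R i j"
    then have "nN R x \<le> i + j" using nN_le_US[OF p2] by blast
    then show "x \<in> (\<Union>n\<in>{..i+j}. KS p R n) \<times> IS p R i \<times> IS p R j"
      using x by (auto simp: US_def mem_Times_iff)
  qed
  then show ?thesis by (rule finite_subset) (auto intro: finite_KS[OF p2] finite_IS[OF p2])
qed

lemma sum_prods2: "(a::'a::comm_semiring_1) * sum f A * sum g B = (\<Sum>x\<in>A\<times>B. a * f (fst x) * g (snd x))"
proof -
  have "a * sum f A * sum g B = (\<Sum>x\<in>A. \<Sum>y\<in>B. a * f x * g y)"
    by (simp add: sum_product sum_distrib_left mult_ac)
  also have "\<dots> = (\<Sum>(x,y)\<in>A\<times>B. a * f x * g y)" by (rule sum.cartesian_product)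
  finally show ?thesis by (simp add: case_prod_beta)
qed

lemma FBP_US:
  fixes l :: "nat \<Rightarrow> 'a::field_char_0"
  assumes p2: "p \<ge> 2" and D: "i + j \<ge> 1" and R: "R = i + j"
  shows "FBP_coeff p l i j = (\<Sum>x\<in>US p R i j. psi l R (nN R x) x)"
proof -
  let ?g = "fps_inv (Lf p l)" and ?S = "log_sum p l"
  have "FBP_coeff p l i j = (\<Sum>n\<le>i+j. ?g $ n * bs_pow ?S n i j)"
    by (simp add: FBP_eq[OF p2] C_def)
  also have "\<dots> = (\<Sum>n\<in>{1..i+j}. ?g $ n * bs_pow ?S n i j)"
    by (rule sum.mono_neutral_right) (auto simp: fps_inv_0 Suc_le_eq)
  also have "\<dots> = (\<Sum>n\<in>{1..i+j}. \<Sum>x\<in>KS p R n \<times> VS p R i j n. psi l R n x)"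
  proof (intro sum.cong refl)
    fix n assume n: "n \<in> {1..i+j}"
    have "?g $ n * bs_pow ?S n i j = (1 / of_nat n) *
      (\<Sum>K\<in>KS p R n. ((- of_nat n) gchoose totK R K) * MK l R K) *
      (\<Sum>x\<in>VS p R i j n. of_nat (n choose tot R (fst x)) * (Mk l R (fst x) * Mk l R (snd x)))"
    proof -
      have n1: "1 \<le> n" "n \<le> R" using n R by auto
      have iR: "i \<le> R" and jR: "j \<le> R" using R by auto
        show ?thesis
          unfolding g_formula[OF p2 n1] bs_formula[OF p2 iR jR] MK_def by simp
    qed
    also have "\<dots> = (\<Sum>x\<in>KS p R n \<times> VS p R i j n. psi l R n x)"
      unfolding psi_def by (rule sum_prods2)
    finally show "?g $ n * bs_pow ?S n i j = (\<Sum>x\<in>KS p R n \<times> VS p R i j n. psi l R n x)" .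
  qed
  also have "\<dots> = (\<Sum>x\<in>US p R i j. psi l R (nN R x) x)"
  proof (rule sum_group_eq)
    show "finite (US p R i j)" by (rule finite_US[OF p2])
    show "nN R ` US p R i j \<subseteq> {1..i+j}"
    proof
      fix y assume "y \<in> nN R ` US p R i j"
      then obtain x where x: "x \<in> US p R i j" "y = nN R x" by blast
      have "nN R x \<le> i + j" using x nN_le_US[OF p2] by blast
      then show "y \<in> {1..i+j}" using x by (auto simp: US_def)
    qed
    fix n assume n: "n \<in> {1..i+j}"
    show "KS p R n \<times> VS p R i j n = {x \<in> US p R i j. nN R x = n}"
      using n by (auto simp: US_def VS_def nN_def)
  qed simp
  finally show ?thesis .
qed


definition phi :: "(nat \<Rightarrow> 'a::field_char_0) \<Rightarrow> nat \<Rightarrow> ((nat \<Rightarrow> nat) \<times> (nat \<Rightarrow> nat) \<times> (nat \<Rightarrow> nat)) \<Rightarrow> 'a" where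
  "phi l R x = (-1) ^ totK R (fst x) *
     (fact (nN R x + totK R (fst x) - 1) /
       ((\<Prod>r\<in>{1..R}. fact (fst x r)) * (\<Prod>r\<in>{0..R}. fact (fst (snd x) r)) * (\<Prod>r\<in>{0..R}. fact (snd (snd x) r)))) *
     ((\<Prod>r\<in>{1..R}. l r ^ fst x r) * (\<Prod>r\<in>{0..R}. c0 l r ^ fst (snd x) r) * (\<Prod>r\<in>{0..R}. c0 l r ^ snd (snd x) r))"

lemma of_nat_mnom:
  assumes "finite A"
  shows "(of_nat (mnom A k) :: 'a::field_char_0) = fact (\<Sum>r\<in>A. k r) / (\<Prod>r\<in>A. fact (k r))"
proof -
  have "(of_nat ((\<Prod>r\<in>A. fact (k r)) * mnom A k) :: 'a) = of_nat (fact (\<Sum>r\<in>A. k r))"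
    by (simp only: mnom_mult[OF assms])
  then have "(\<Prod>r\<in>A. fact (k r)) * (of_nat (mnom A k) :: 'a) = fact (\<Sum>r\<in>A. k r)"
    by (simp add: of_nat_prod)
  moreover have "(\<Prod>r\<in>A. fact (k r) :: 'a) \<noteq> 0" by (simp add: prod_zero_iff assms)
  ultimately show ?thesis by (simp add: field_simps)
qed

lemma gchoose_neg:
  assumes n: "n \<ge> 1"
  shows "((- of_nat n) gchoose m :: 'a::field_char_0) = (-1) ^ m * (fact (n + m - 1) / (fact m * fact (n - 1)))"
proof -
  have "((- of_nat n) gchoose m :: 'a) = (-1) ^ m * ((of_nat n + of_nat m - 1) gchoose m)"
    by (rule gbinomial_minus)
  also have "(of_nat n + of_nat m - 1 :: 'a) = of_nat (n + m - 1)" using n by (simp add: of_nat_diff)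
  also have "(of_nat (n + m - 1) gchoose m :: 'a) = of_nat ((n + m - 1) choose m)"
    by (simp add: binomial_gbinomial)
  also have "\<dots> = fact (n + m - 1) / (fact m * fact (n + m - 1 - m))"
    using n by (intro binomial_fact) simp
  also have "n + m - 1 - m = n - 1" by simp
  finally show ?thesis .
qed

lemma coef_alg:
  fixes N FM FN1 FA FB PK P1 P2 F s LK C1 C2 :: "'a::field"
  assumes "N \<noteq> 0" "FM \<noteq> 0" "FN1 \<noteq> 0" "FA \<noteq> 0" "FB \<noteq> 0" "PK \<noteq> 0" "P1 \<noteq> 0" "P2 \<noteq> 0"
  shows "(1/N) * ((s * (F/(FM*FN1))) * ((FM/PK) * LK)) * (((N*FN1)/(FA*FB)) * (((FA/P1) * C1) * ((FB/P2) * C2)))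
       = s * (F/(PK*P1*P2)) * (LK*C1*C2)"
  using assms by (simp add: field_simps)

lemma psi_phi:
  fixes l :: "nat \<Rightarrow> 'a::field_char_0"
  assumes x: "x \<in> US p R i j"
  shows "psi l R (nN R x) x = phi l R x"
proof -
  obtain K k1 k2 where xe: "x = (K, k1, k2)" by (cases x) auto
  define n where "n = nN R x"
  define m where "m = totK R K"
  define a where "a = tot R k1"
  define b where "b = tot R k2"
  have n1: "n \<ge> 1" using x by (simp add: US_def n_def)
  have nab: "n = a + b" by (simp add: n_def nN_def xe a_def b_def)
  define PK where "PK = (\<Prod>r\<in>{1..R}. fact (K r) :: 'a)"
  define P1 where "P1 = (\<Prod>r\<in>{0..R}. fact (k1 r) :: 'a)"
  define P2 where "P2 = (\<Prod>r\<in>{0..R}. fact (k2 r) :: 'a)"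
  define LK where "LK = (\<Prod>r\<in>{1..R}. l r ^ K r)"
  define C1 where "C1 = (\<Prod>r\<in>{0..R}. c0 l r ^ k1 r)"
  define C2 where "C2 = (\<Prod>r\<in>{0..R}. c0 l r ^ k2 r)"
  have PK0: "PK \<noteq> 0" and P10: "P1 \<noteq> 0" and P20: "P2 \<noteq> 0" by (simp_all add: PK_def P1_def P2_def)
  have mK: "(of_nat (mnom {1..R} K) :: 'a) = fact m / PK"
    by (simp add: of_nat_mnom m_def totK_def PK_def)
  have m1: "(of_nat (mnom {0..R} k1) :: 'a) = fact a / P1"
    by (simp add: of_nat_mnom a_def tot_def P1_def)
  have m2: "(of_nat (mnom {0..R} k2) :: 'a) = fact b / P2"
    by (simp add: of_nat_mnom b_def tot_def P2_def)
  have ch: "(of_nat (n choose a) :: 'a) = fact n / (fact a * fact b)"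
    using nab by (simp add: binomial_fact)
  have fn: "(fact n :: 'a) = of_nat n * fact (n - 1)" using n1 by (simp add: fact_reduce)
  have gc: "((- of_nat n) gchoose m :: 'a) = (-1) ^ m * (fact (n + m - 1) / (fact m * fact (n - 1)))"
    by (rule gchoose_neg[OF n1])
  have nz: "(of_nat n :: 'a) \<noteq> 0" using n1 by simp
  have "psi l R (nN R x) x = (1 / of_nat n) * (((- of_nat n) gchoose m) * (of_nat (mnom {1..R} K) * LK)) *
      (of_nat (n choose a) * ((of_nat (mnom {0..R} k1) * C1) * (of_nat (mnom {0..R} k2) * C2)))"
    unfolding psi_def MK_def Mk_def xe fst_conv snd_conv n_def[symmetric, unfolded xe] m_def[symmetric]
      a_def[symmetric] LK_def C1_def C2_def ..
  also have "\<dots> = (1 / of_nat n) * (((-1) ^ m * (fact (n + m - 1) / (fact m * fact (n - 1)))) * ((fact m / PK) * LK)) *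
      (((of_nat n * fact (n - 1)) / (fact a * fact b)) * (((fact a / P1) * C1) * ((fact b / P2) * C2)))"
    unfolding gc mK m1 m2 ch fn ..
  also have "\<dots> = (-1) ^ m * (fact (n + m - 1) / (PK * P1 * P2)) * (LK * C1 * C2)"
    by (rule coef_alg) (use nz PK0 P10 P20 in simp_all)
  also have "\<dots> = phi l R x"
    unfolding phi_def xe fst_conv snd_conv n_def[symmetric, unfolded xe] m_def[symmetric]
      PK_def P1_def P2_def LK_def C1_def C2_def ..
  finally show ?thesis .
qed


definition Vset :: "nat \<Rightarrow> nat \<Rightarrow> nat \<Rightarrow> (nat \<Rightarrow> nat) set" where
  "Vset p i j = {\<nu>. \<nu> 0 = 0 \<and> finite {r. \<nu> r \<noteq> 0} \<and>
              (\<Sum>r\<in>{r. \<nu> r \<noteq> 0}. (p ^ r - 1) * \<nu> r) = i + j - 1}"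

definition Tset :: "nat \<Rightarrow> nat \<Rightarrow> nat \<Rightarrow> (nat \<Rightarrow> nat) \<Rightarrow> (nat \<times> nat \<times> (nat \<Rightarrow> nat) \<times> (nat \<Rightarrow> nat) \<times> (nat \<Rightarrow> nat)) set" where
  "Tset p i j \<nu> = {(i0, j0, I, J, K).
            I 0 = 0 \<and> J 0 = 0 \<and> K 0 = 0 \<and>
            (\<forall>r\<ge>1. I r + J r + K r = \<nu> r) \<and>
            i0 + (\<Sum>r\<in>{r. \<nu> r \<noteq> 0}. p ^ r * I r) = i \<and>
            j0 + (\<Sum>r\<in>{r. \<nu> r \<noteq> 0}. p ^ r * J r) = j}"

definition TF :: "nat \<Rightarrow> nat \<Rightarrow> nat \<Rightarrow> nat \<Rightarrow> (nat \<times> nat \<times> (nat \<Rightarrow> nat) \<times> (nat \<Rightarrow> nat) \<times> (nat \<Rightarrow> nat)) set" where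
  "TF p R i j = {(i0, j0, I, J, K). I \<in> Fs {1..R} \<and> J \<in> Fs {1..R} \<and> K \<in> Fs {1..R} \<and>
     (\<Sum>r\<in>{1..R}. (p ^ r - 1) * (I r + J r + K r)) = i + j - 1 \<and>
     i0 + (\<Sum>r\<in>{1..R}. p ^ r * I r) = i \<and> j0 + (\<Sum>r\<in>{1..R}. p ^ r * J r) = j}"

definition nu :: "(nat \<times> nat \<times> (nat \<Rightarrow> nat) \<times> (nat \<Rightarrow> nat) \<times> (nat \<Rightarrow> nat)) \<Rightarrow> nat \<Rightarrow> nat" where
  "nu = (\<lambda>(i0, j0, I, J, K). \<lambda>r. I r + J r + K r)"

lemma sum_supp:
  assumes "finite B" "{r. \<nu> r \<noteq> 0} \<subseteq> B" "\<And>r. r \<in> B \<Longrightarrow> \<nu> r = (0::nat) \<Longrightarrow> f r = 0"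
  shows "(\<Sum>r\<in>{r. \<nu> r \<noteq> 0}. f r) = (\<Sum>r\<in>B. f r)"
  by (rule sum.mono_neutral_left) (use assms in auto)

lemma prod_supp:
  assumes "finite B" "{r. \<nu> r \<noteq> 0} \<subseteq> B" "\<And>r. r \<in> B \<Longrightarrow> \<nu> r = (0::nat) \<Longrightarrow> f r = 1"
  shows "(\<Prod>r\<in>{r. \<nu> r \<noteq> 0}. f r) = (\<Prod>r\<in>B. f r)"
  by (rule prod.mono_neutral_left) (use assms in auto)

lemma pr_ge_r: "p \<ge> 2 \<Longrightarrow> r \<le> p ^ r - (1::nat)"
  using r_less_pow[of p r] by simp

lemma Vset_supp:
  assumes p2: "p \<ge> 2" and R: "R = i + j" and v: "\<nu> \<in> Vset p i j" and r: "\<nu> r \<noteq> 0"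
  shows "r \<in> {1..R}" "\<nu> r \<le> i + j"
proof -
  have fin: "finite {r. \<nu> r \<noteq> 0}" using v by (simp add: Vset_def)
  have r0: "r \<noteq> 0"
  proof
    assume "r = 0" then show False using v r by (simp add: Vset_def)
  qed
  have "(p ^ r - 1) * \<nu> r \<le> (\<Sum>r\<in>{r. \<nu> r \<noteq> 0}. (p ^ r - 1) * \<nu> r)"
    using fin r by (intro le_sum_term) auto
  also have "\<dots> = i + j - 1" using v by (simp add: Vset_def)
  finally have le: "(p ^ r - 1) * \<nu> r \<le> i + j - 1" .
  have "r \<le> p ^ r - 1" by (rule pr_ge_r[OF p2])
  also have "\<dots> \<le> (p ^ r - 1) * \<nu> r" using r by simp
  finally have "r \<le> i + j - 1" using le by simp
  then show "r \<in> {1..R}" using r0 R by auto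
  have h: "1 \<le> p ^ r - 1" using pr_ge1[OF p2, of r] r0 by simp
  have "\<nu> r \<le> (p ^ r - 1) * \<nu> r" using mult_le_mono1[OF h, of "\<nu> r"] by simp
  then show "\<nu> r \<le> i + j" using le by (meson diff_le_self order_trans)
qed

lemma finite_Vset:
  assumes p2: "p \<ge> 2"
  shows "finite (Vset p i j)"
proof -
  have "Vset p i j \<subseteq> {f. \<forall>x. (x \<in> {1..i+j} \<longrightarrow> f x \<le> i + j) \<and> (x \<notin> {1..i+j} \<longrightarrow> f x = 0)}"
  proof
    fix \<nu> assume v: "\<nu> \<in> Vset p i j"
    have "\<nu> x \<le> i + j" for x using Vset_supp(2)[OF p2 refl v, of x] by (cases "\<nu> x = 0") auto
    moreover have "\<nu> x = 0" if "x \<notin> {1..i+j}" for x using Vset_supp(1)[OF p2 refl v, of x] that by auto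
    ultimately show "\<nu> \<in> {f. \<forall>x. (x \<in> {1..i+j} \<longrightarrow> f x \<le> i + j) \<and> (x \<notin> {1..i+j} \<longrightarrow> f x = 0)}" by auto
  qed
  then show ?thesis by (rule finite_subset) (rule finite_bounded_funs, simp)
qed

lemma TF_bounds:
  assumes p2: "p \<ge> 2" and t: "(i0, j0, I, J, K) \<in> TF p R i j"
  shows "i0 \<le> i" "j0 \<le> j" "\<And>r. I r \<le> i + j" "\<And>r. J r \<le> i + j" "\<And>r. K r \<le> i + j"
proof -
  from t have I: "I \<in> Fs {1..R}" and J: "J \<in> Fs {1..R}" and K: "K \<in> Fs {1..R}"
    and sK: "(\<Sum>r\<in>{1..R}. (p ^ r - 1) * (I r + J r + K r)) = i + j - 1"
    and sI: "i0 + (\<Sum>r\<in>{1..R}. p ^ r * I r) = i" and sJ: "j0 + (\<Sum>r\<in>{1..R}. p ^ r * J r) = j"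
    by (auto simp: TF_def)
  show "i0 \<le> i" using sI by simp
  show "j0 \<le> j" using sJ by simp
  fix r
  show "I r \<le> i + j"
  proof (cases "r \<in> {1..R}")
    case True
    have "I r \<le> p ^ r * I r" using p2 by simp
    also have "\<dots> \<le> (\<Sum>r\<in>{1..R}. p ^ r * I r)" using True by (intro le_sum_term) auto
    finally show ?thesis using sI by simp
  qed (use I in \<open>auto simp: Fs_def\<close>)
  show "J r \<le> i + j"
  proof (cases "r \<in> {1..R}")
    case True
    have "J r \<le> p ^ r * J r" using p2 by simp
    also have "\<dots> \<le> (\<Sum>r\<in>{1..R}. p ^ r * J r)" using True by (intro le_sum_term) auto
    finally show ?thesis using sJ by simp
  qed (use J in \<open>auto simp: Fs_def\<close>)
  show "K r \<le> i + j"
  proof (cases "r \<in> {1..R}")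
    case True
    have "K r \<le> (p ^ r - 1) * (I r + J r + K r)" using pr_ge1[OF p2, of r] True
      by (metis add.commute le_add1 mult.commute mult_le_mono nat_mult_1_right order.trans atLeastAtMost_iff)
    also have "\<dots> \<le> (\<Sum>r\<in>{1..R}. (p ^ r - 1) * (I r + J r + K r))" using True by (intro le_sum_term) auto
    finally show ?thesis using sK by simp
  qed (use K in \<open>auto simp: Fs_def\<close>)
qed

lemma finite_TF:
  assumes p2: "p \<ge> 2"
  shows "finite (TF p R i j)"
proof -
  let ?B = "{f. \<forall>x. (x \<in> {1..R} \<longrightarrow> f x \<le> i + j) \<and> (x \<notin> {1..R} \<longrightarrow> f x = 0)}"
  have "TF p R i j \<subseteq> {..i} \<times> {..j} \<times> ?B \<times> ?B \<times> ?B"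
  proof
    fix t assume t: "t \<in> TF p R i j"
    obtain i0 j0 I J K where te: "t = (i0, j0, I, J, K)" by (cases t rule: prod_cases5)
    have tt: "(i0, j0, I, J, K) \<in> TF p R i j" using t te by simp
    then have "I \<in> Fs {1..R}" "J \<in> Fs {1..R}" "K \<in> Fs {1..R}" by (auto simp: TF_def)
    then show "t \<in> {..i} \<times> {..j} \<times> ?B \<times> ?B \<times> ?B"
      using TF_bounds[OF p2 tt] te by (auto simp: Fs_def)
  qed
  moreover have "finite ?B" by (rule finite_bounded_funs) simp
  then have "finite ({..i} \<times> {..j} \<times> ?B \<times> ?B \<times> ?B)" by simp
  ultimately show ?thesis by (rule finite_subset)
qed

definition Fterm :: "(nat \<Rightarrow> 'a::field_char_0) \<Rightarrow> (nat \<Rightarrow> nat) \<Rightarrow> (nat \<times> nat \<times> (nat \<Rightarrow> nat) \<times> (nat \<Rightarrow> nat) \<times> (nat \<Rightarrow> nat)) \<Rightarrow> 'a" where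
  "Fterm l \<nu> = (\<lambda>(i0, j0, I, J, K).
         (-1) ^ (\<Sum>r\<in>{r. \<nu> r \<noteq> 0}. K r) *
         (fact (i0 + j0 + (\<Sum>r\<in>{r. \<nu> r \<noteq> 0}. I r + J r + K r) - 1) /
          (fact i0 * fact j0 * (\<Prod>r\<in>{r. \<nu> r \<noteq> 0}. fact (I r) * fact (J r) * fact (K r))))
         * (\<Prod>r\<in>{r. \<nu> r \<noteq> 0}. l r ^ \<nu> r))"

lemma nu_TF_Vset:
  assumes t: "(i0, j0, I, J, K) \<in> TF p R i j"
  shows "nu (i0, j0, I, J, K) \<in> Vset p i j"
proof -
  let ?v = "\<lambda>r. I r + J r + K r"
  from t have I: "I \<in> Fs {1..R}" and J: "J \<in> Fs {1..R}" and K: "K \<in> Fs {1..R}"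
    and sK: "(\<Sum>r\<in>{1..R}. (p ^ r - 1) * (I r + J r + K r)) = i + j - 1"
    by (auto simp: TF_def)
  have supp: "{r. ?v r \<noteq> 0} \<subseteq> {1..R}" using I J K by (auto simp: Fs_def)
  have "?v 0 = 0" using I J K by (auto simp: Fs_def)
  moreover have "finite {r. ?v r \<noteq> 0}" using supp by (rule finite_subset) simp
  moreover have "(\<Sum>r\<in>{r. ?v r \<noteq> 0}. (p ^ r - 1) * ?v r) = i + j - 1"
    using sK by (subst sum_supp[OF _ supp]) auto
  ultimately have "?v \<in> Vset p i j" unfolding Vset_def mem_Collect_eq by blast
  moreover have "nu (i0, j0, I, J, K) = ?v" by (simp add: nu_def)
  ultimately show ?thesis by (simp only:)
qed

lemma Tset_eq:
  assumes p2: "p \<ge> 2" and R: "R = i + j" and v: "\<nu> \<in> Vset p i j"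
  shows "Tset p i j \<nu> = {t \<in> TF p R i j. nu t = \<nu>}"
proof (intro set_eqI iffI)
  have suppv: "{r. \<nu> r \<noteq> 0} \<subseteq> {1..R}" using Vset_supp(1)[OF p2 R v] by blast
  have v0: "\<nu> 0 = 0" and sv: "(\<Sum>r\<in>{r. \<nu> r \<noteq> 0}. (p ^ r - 1) * \<nu> r) = i + j - 1"
    using v by (auto simp: Vset_def)
  {
    fix t assume t: "t \<in> Tset p i j \<nu>"
    obtain i0 j0 I J K where te: "t = (i0, j0, I, J, K)" by (cases t rule: prod_cases5)
    from t te have I0: "I 0 = 0" and J0: "J 0 = 0" and K0: "K 0 = 0"
      and sum1: "\<forall>r\<ge>1. I r + J r + K r = \<nu> r"
      and sI: "i0 + (\<Sum>r\<in>{r. \<nu> r \<noteq> 0}. p ^ r * I r) = i"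
      and sJ: "j0 + (\<Sum>r\<in>{r. \<nu> r \<noteq> 0}. p ^ r * J r) = j"
      by (auto simp: Tset_def)
    have vr: "I r + J r + K r = \<nu> r" for r using sum1 I0 J0 K0 v0 by (cases "r = 0") auto
    have z: "I r = 0 \<and> J r = 0 \<and> K r = 0" if "r \<notin> {1..R}" for r
    proof -
      have "\<nu> r = 0" using suppv that by blast
      then show ?thesis using vr[of r] by simp
    qed
    have z2: "I r = 0 \<and> J r = 0 \<and> K r = 0" if "\<nu> r = 0" for r using vr[of r] that by simp
    have "I \<in> Fs {1..R}" "J \<in> Fs {1..R}" "K \<in> Fs {1..R}"
      using z by (auto simp: Fs_def)
    moreover have "(\<Sum>r\<in>{1..R}. (p ^ r - 1) * (I r + J r + K r)) = i + j - 1"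
    proof -
      have "(\<Sum>r\<in>{1..R}. (p ^ r - 1) * (I r + J r + K r)) = (\<Sum>r\<in>{1..R}. (p ^ r - 1) * \<nu> r)"
        by (simp add: vr)
      also have "\<dots> = (\<Sum>r\<in>{r. \<nu> r \<noteq> 0}. (p ^ r - 1) * \<nu> r)"
        by (rule sum_supp[OF _ suppv, symmetric]) auto
      finally show ?thesis using sv by simp
    qed
    moreover have "i0 + (\<Sum>r\<in>{1..R}. p ^ r * I r) = i"
    proof -
      have "(\<Sum>r\<in>{r. \<nu> r \<noteq> 0}. p ^ r * I r) = (\<Sum>r\<in>{1..R}. p ^ r * I r)"
        by (rule sum_supp[OF _ suppv]) (use z2 in auto)
      then show ?thesis using sI by simp
    qed
    moreover have "j0 + (\<Sum>r\<in>{1..R}. p ^ r * J r) = j"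
    proof -
      have "(\<Sum>r\<in>{r. \<nu> r \<noteq> 0}. p ^ r * J r) = (\<Sum>r\<in>{1..R}. p ^ r * J r)"
        by (rule sum_supp[OF _ suppv]) (use z2 in auto)
      then show ?thesis using sJ by simp
    qed
    moreover have "nu t = \<nu>" using vr te by (auto simp: nu_def)
    ultimately show "t \<in> {t \<in> TF p R i j. nu t = \<nu>}" using te by (simp add: TF_def)
  next
    fix t assume t: "t \<in> {t \<in> TF p R i j. nu t = \<nu>}"
    obtain i0 j0 I J K where te: "t = (i0, j0, I, J, K)" by (cases t rule: prod_cases5)
    from t te have I: "I \<in> Fs {1..R}" and J: "J \<in> Fs {1..R}" and K: "K \<in> Fs {1..R}"
      and sI: "i0 + (\<Sum>r\<in>{1..R}. p ^ r * I r) = i" and sJ: "j0 + (\<Sum>r\<in>{1..R}. p ^ r * J r) = j"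
      and vr: "\<nu> = (\<lambda>r. I r + J r + K r)"
      by (auto simp: TF_def nu_def)
    have "I 0 = 0" "J 0 = 0" "K 0 = 0" using I J K by (auto simp: Fs_def)
    moreover have "\<forall>r\<ge>1. I r + J r + K r = \<nu> r" using vr by simp
    moreover have "i0 + (\<Sum>r\<in>{r. \<nu> r \<noteq> 0}. p ^ r * I r) = i"
      using sI vr by (subst sum_supp[OF _ suppv]) auto
    moreover have "j0 + (\<Sum>r\<in>{r. \<nu> r \<noteq> 0}. p ^ r * J r) = j"
      using sJ vr by (subst sum_supp[OF _ suppv]) auto
    ultimately show "t \<in> Tset p i j \<nu>" using te by (simp add: Tset_def)
  }
qed

lemma Tgt1:
  fixes l :: "nat \<Rightarrow> 'a::field_char_0"
  assumes p2: "p \<ge> 2" and R: "R = i + j"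
  shows "(\<Sum>\<nu>\<in>Vset p i j. \<Sum>t\<in>Tset p i j \<nu>. Fterm l \<nu> t) = (\<Sum>t\<in>TF p R i j. Fterm l (nu t) t)"
proof (rule sum_group_eq)
  show "finite (TF p R i j)" by (rule finite_TF[OF p2])
  show "finite (Vset p i j)" by (rule finite_Vset[OF p2])
  show "nu ` TF p R i j \<subseteq> Vset p i j"
  proof
    fix v assume "v \<in> nu ` TF p R i j"
    then obtain t where t: "t \<in> TF p R i j" "v = nu t" by blast
    obtain i0 j0 I J K where te: "t = (i0, j0, I, J, K)" by (cases t rule: prod_cases5)
    show "v \<in> Vset p i j" using nu_TF_Vset[of i0 j0 I J K p R i j] t te by simp
  qed
  fix v assume "v \<in> Vset p i j"
  then show "Tset p i j v = {t \<in> TF p R i j. nu t = v}" by (rule Tset_eq[OF p2 R])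
qed


lemma sum_split0: "(\<Sum>r\<in>{0..(R::nat)}. g r) = g 0 + (\<Sum>r\<in>{1..R}. (g r :: 'b::comm_monoid_add))"
  by (simp add: sum.atLeast_Suc_atMost)

lemma prod_split0: "(\<Prod>r\<in>{0..(R::nat)}. g r) = g 0 * (\<Prod>r\<in>{1..R}. (g r :: 'b::comm_monoid_mult))"
  by (simp add: prod.atLeast_Suc_atMost)

lemma upd0_sum: "(\<Sum>r\<in>{1..(R::nat)}. f ((I(0 := a)) r) r) = (\<Sum>r\<in>{1..R}. f (I r) r)"
  by (rule sum.cong) auto

lemma upd0_prod: "(\<Prod>r\<in>{1..(R::nat)}. f ((I(0 := a)) r) r) = (\<Prod>r\<in>{1..R}. f (I r) r)"
  by (rule prod.cong) auto

lemma split_pw: "(p::nat) \<ge> 1 \<Longrightarrow> (\<Sum>r\<in>{1..(R::nat)}. p ^ r * I r) = (\<Sum>r\<in>{1..R}. I r) + (\<Sum>r\<in>{1..R}. (p ^ r - 1) * I r)"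
proof -
  assume p: "p \<ge> 1"
  have "p ^ r * I r = I r + (p ^ r - 1) * I r" for r
  proof -
    have "p ^ r \<ge> 1" using p by simp
    then show ?thesis by (simp add: diff_mult_distrib)
  qed
  then show ?thesis by (simp add: sum.distrib)
qed

lemma TF_US:
  assumes p2: "p \<ge> 2" and D: "i + j \<ge> 1" and t: "(i0, j0, I, J, K) \<in> TF p R i j"
  shows "(K, I(0 := i0), J(0 := j0)) \<in> US p R i j"
proof -
  from t have I: "I \<in> Fs {1..R}" and J: "J \<in> Fs {1..R}" and K: "K \<in> Fs {1..R}"
    and sK: "(\<Sum>r\<in>{1..R}. (p ^ r - 1) * (I r + J r + K r)) = i + j - 1"
    and sI: "i0 + (\<Sum>r\<in>{1..R}. p ^ r * I r) = i" and sJ: "j0 + (\<Sum>r\<in>{1..R}. p ^ r * J r) = j"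
    by (auto simp: TF_def)
  define SI where "SI = (\<Sum>r\<in>{1..R}. I r)"
  define SJ where "SJ = (\<Sum>r\<in>{1..R}. J r)"
  define XI where "XI = (\<Sum>r\<in>{1..R}. (p ^ r - 1) * I r)"
  define XJ where "XJ = (\<Sum>r\<in>{1..R}. (p ^ r - 1) * J r)"
  define XK where "XK = (\<Sum>r\<in>{1..R}. (p ^ r - 1) * K r)"
  have p1: "p \<ge> 1" using p2 by simp
  have ei: "i = i0 + SI + XI" using sI split_pw[OF p1, where R=R and I=I] by (simp add: SI_def XI_def)
  have ej: "j = j0 + SJ + XJ" using sJ split_pw[OF p1, where R=R and I=J] by (simp add: SJ_def XJ_def)
  have ek: "XI + XJ + XK = i + j - 1" using sK
    by (simp add: XI_def XJ_def XK_def distrib_left sum.distrib)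
  define n where "n = i0 + SI + (j0 + SJ)"
  have n1: "n \<ge> 1"
  proof (rule ccontr)
    assume "\<not> n \<ge> 1"
    then have "i0 = 0" "SI = 0" "j0 = 0" "SJ = 0" by (auto simp: n_def)
    then have "XI = 0" "XJ = 0" by (simp_all add: XI_def XJ_def SI_def SJ_def)
    then show False using ei ej D \<open>i0 = 0\<close> \<open>SI = 0\<close> \<open>j0 = 0\<close> \<open>SJ = 0\<close> by simp
  qed
  have XKn: "XK = n - 1" using ek ei ej n1 unfolding n_def by linarith
  have tot1: "tot R (I(0 := i0)) = i0 + SI"
    unfolding tot_def SI_def sum_split0 using upd0_sum[where f="\<lambda>x r. x" and I=I and a=i0 and R=R] by simp
  have tot2: "tot R (J(0 := j0)) = j0 + SJ"
    unfolding tot_def SJ_def sum_split0 using upd0_sum[where f="\<lambda>x r. x" and I=J and a=j0 and R=R] by simp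
  have nN: "nN R (K, I(0 := i0), J(0 := j0)) = n" by (simp add: nN_def tot1 tot2 n_def)
  have "K \<in> KS p R n"
  proof -
    have "(\<Sum>r\<in>{1..R}. K r * (p ^ r - 1)) = XK" by (simp add: XK_def mult.commute)
    then show ?thesis using K XKn by (simp add: KS_def)
  qed
  moreover have "I(0 := i0) \<in> IS p R i"
  proof -
    have "I(0 := i0) \<in> Fs {0..R}" using I by (auto simp: Fs_def)
    moreover have "(\<Sum>r\<in>{0..R}. (I(0 := i0)) r * p ^ r) = i"
      unfolding sum_split0 using upd0_sum[where f="\<lambda>x r. x * p ^ r" and I=I and a=i0 and R=R] sI by (simp add: mult.commute)
    ultimately show ?thesis by (simp add: IS_def)
  qed
  moreover have "J(0 := j0) \<in> IS p R j"
  proof -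
    have "J(0 := j0) \<in> Fs {0..R}" using J by (auto simp: Fs_def)
    moreover have "(\<Sum>r\<in>{0..R}. (J(0 := j0)) r * p ^ r) = j"
      unfolding sum_split0 using upd0_sum[where f="\<lambda>x r. x * p ^ r" and I=J and a=j0 and R=R] sJ by (simp add: mult.commute)
    ultimately show ?thesis by (simp add: IS_def)
  qed
  ultimately show ?thesis using n1 nN by (simp add: US_def)
qed

lemma US_TF:
  assumes p2: "p \<ge> 2" and x: "(K, k1, k2) \<in> US p R i j"
  shows "(k1 0, k2 0, k1(0 := 0), k2(0 := 0), K) \<in> TF p R i j"
proof -
  define n where "n = tot R k1 + tot R k2"
  from x have n1: "n \<ge> 1" and K: "K \<in> KS p R n" and k1: "k1 \<in> IS p R i" and k2: "k2 \<in> IS p R j"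
    by (auto simp: US_def nN_def n_def)
  from K have KF: "K \<in> Fs {1..R}" and sK: "(\<Sum>r\<in>{1..R}. K r * (p ^ r - 1)) = n - 1"
    by (auto simp: KS_def)
  from k1 have k1F: "k1 \<in> Fs {0..R}" and s1: "(\<Sum>r\<in>{0..R}. k1 r * p ^ r) = i" by (auto simp: IS_def)
  from k2 have k2F: "k2 \<in> Fs {0..R}" and s2: "(\<Sum>r\<in>{0..R}. k2 r * p ^ r) = j" by (auto simp: IS_def)
  define SI where "SI = (\<Sum>r\<in>{1..R}. k1 r)"
  define SJ where "SJ = (\<Sum>r\<in>{1..R}. k2 r)"
  define XI where "XI = (\<Sum>r\<in>{1..R}. (p ^ r - 1) * k1 r)"
  define XJ where "XJ = (\<Sum>r\<in>{1..R}. (p ^ r - 1) * k2 r)"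
  define XK where "XK = (\<Sum>r\<in>{1..R}. (p ^ r - 1) * K r)"
  have p1: "p \<ge> 1" using p2 by simp
  have pI: "(\<Sum>r\<in>{1..R}. p ^ r * k1 r) = k1 0 * 0 + SI + XI"
    using split_pw[OF p1, where R=R and I=k1] by (simp add: SI_def XI_def)
  have pJ: "(\<Sum>r\<in>{1..R}. p ^ r * k2 r) = SJ + XJ"
    using split_pw[OF p1, where R=R and I=k2] by (simp add: SJ_def XJ_def)
  have ei: "i = k1 0 + SI + XI" using s1 pI unfolding sum_split0 by (simp add: mult.commute)
  have ej: "j = k2 0 + SJ + XJ" using s2 pJ unfolding sum_split0 by (simp add: mult.commute)
  have en: "n = k1 0 + SI + (k2 0 + SJ)" by (simp add: n_def tot_def sum_split0 SI_def SJ_def)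
  have eK: "XK = n - 1" using sK by (simp add: XK_def mult.commute)
  have "k1(0 := 0) \<in> Fs {1..R}" "k2(0 := 0) \<in> Fs {1..R}" using k1F k2F by (auto simp: Fs_def)
  moreover have "(\<Sum>r\<in>{1..R}. (p ^ r - 1) * ((k1(0 := 0)) r + (k2(0 := 0)) r + K r)) = i + j - 1"
  proof -
    have "(\<Sum>r\<in>{1..R}. (p ^ r - 1) * ((k1(0 := 0)) r + (k2(0 := 0)) r + K r)) =
        (\<Sum>r\<in>{1..R}. (p ^ r - 1) * (k1 r + k2 r + K r))"
      by (rule sum.cong) auto
    also have "\<dots> = XI + XJ + XK" by (simp add: XI_def XJ_def XK_def distrib_left sum.distrib)
    finally show ?thesis using ei ej en eK n1 by linarith
  qed
  moreover have "k1 0 + (\<Sum>r\<in>{1..R}. p ^ r * (k1(0 := 0)) r) = i"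
  proof -
    have "(\<Sum>r\<in>{1..R}. p ^ r * (k1(0 := 0)) r) = (\<Sum>r\<in>{1..R}. p ^ r * k1 r)" by (rule sum.cong) auto
    then show ?thesis using ei pI by simp
  qed
  moreover have "k2 0 + (\<Sum>r\<in>{1..R}. p ^ r * (k2(0 := 0)) r) = j"
  proof -
    have "(\<Sum>r\<in>{1..R}. p ^ r * (k2(0 := 0)) r) = (\<Sum>r\<in>{1..R}. p ^ r * k2 r)" by (rule sum.cong) auto
    then show ?thesis using ej pJ by simp
  qed
  ultimately show ?thesis using KF by (simp add: TF_def)
qed

lemma summand_eq:
  fixes l :: "nat \<Rightarrow> 'a::field_char_0"
  assumes t: "(i0, j0, I, J, K) \<in> TF p R i j"
  shows "phi l R (K, I(0 := i0), J(0 := j0)) = Fterm l (nu (i0, j0, I, J, K)) (i0, j0, I, J, K)"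
proof -
  let ?v = "\<lambda>r. I r + J r + K r"
  from t have I: "I \<in> Fs {1..R}" and J: "J \<in> Fs {1..R}" and K: "K \<in> Fs {1..R}"
    by (auto simp: TF_def)
  have supp: "{r. ?v r \<noteq> 0} \<subseteq> {1..R}" using I J K by (auto simp: Fs_def)
  have z: "I r = 0 \<and> J r = 0 \<and> K r = 0" if "?v r = 0" for r using that by simp
  have e1: "(\<Sum>r\<in>{r. ?v r \<noteq> 0}. K r) = totK R K"
    unfolding totK_def by (rule sum_supp[OF _ supp]) auto
  have e2: "(\<Sum>r\<in>{r. ?v r \<noteq> 0}. I r + J r + K r) = (\<Sum>r\<in>{1..R}. I r) + (\<Sum>r\<in>{1..R}. J r) + totK R K"
    unfolding totK_def by (subst sum_supp[OF _ supp]) (auto simp: sum.distrib)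
  have e3: "(\<Prod>r\<in>{r. ?v r \<noteq> 0}. fact (I r) * fact (J r) * fact (K r)) =
      (\<Prod>r\<in>{1..R}. fact (I r)) * (\<Prod>r\<in>{1..R}. fact (J r)) * (\<Prod>r\<in>{1..R}. fact (K r) :: 'a)"
    by (subst prod_supp[OF _ supp]) (auto simp: prod.distrib)
  have e4: "(\<Prod>r\<in>{r. ?v r \<noteq> 0}. l r ^ ?v r) =
      (\<Prod>r\<in>{1..R}. l r ^ I r) * (\<Prod>r\<in>{1..R}. l r ^ J r) * (\<Prod>r\<in>{1..R}. l r ^ K r)"
    by (subst prod_supp[OF _ supp]) (auto simp: prod.distrib power_add)
  have tot1: "tot R (I(0 := i0)) = i0 + (\<Sum>r\<in>{1..R}. I r)"
    unfolding tot_def sum_split0 using upd0_sum[where f="\<lambda>x r. x" and I=I and a=i0 and R=R] by simp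
  have tot2: "tot R (J(0 := j0)) = j0 + (\<Sum>r\<in>{1..R}. J r)"
    unfolding tot_def sum_split0 using upd0_sum[where f="\<lambda>x r. x" and I=J and a=j0 and R=R] by simp
  have f1: "(\<Prod>r\<in>{0..R}. fact ((I(0 := i0)) r) :: 'a) = fact i0 * (\<Prod>r\<in>{1..R}. fact (I r))"
    unfolding prod_split0 using upd0_prod[where f="\<lambda>x r. fact x :: 'a" and I=I and a=i0 and R=R] by simp
  have f2: "(\<Prod>r\<in>{0..R}. fact ((J(0 := j0)) r) :: 'a) = fact j0 * (\<Prod>r\<in>{1..R}. fact (J r))"
    unfolding prod_split0 using upd0_prod[where f="\<lambda>x r. fact x :: 'a" and I=J and a=j0 and R=R] by simp
  have cc: "(\<Prod>r\<in>{1..R}. c0 l r ^ I' r) = (\<Prod>r\<in>{1..R}. l r ^ I' r)" for I'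
    by (rule prod.cong) (auto simp: c0_def)
  have c1: "(\<Prod>r\<in>{0..R}. c0 l r ^ (I(0 := i0)) r) = (\<Prod>r\<in>{1..R}. l r ^ I r)"
    unfolding prod_split0 using upd0_prod[where f="\<lambda>x r. c0 l r ^ x" and I=I and a=i0 and R=R] cc[of I]
    by (simp add: c0_def)
  have c2: "(\<Prod>r\<in>{0..R}. c0 l r ^ (J(0 := j0)) r) = (\<Prod>r\<in>{1..R}. l r ^ J r)"
    unfolding prod_split0 using upd0_prod[where f="\<lambda>x r. c0 l r ^ x" and I=J and a=j0 and R=R] cc[of J]
    by (simp add: c0_def)
  have nn: "nN R (K, I(0 := i0), J(0 := j0)) + totK R K = i0 + j0 + ((\<Sum>r\<in>{1..R}. I r) + (\<Sum>r\<in>{1..R}. J r) + totK R K)"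
    by (simp add: nN_def tot1 tot2)
  show ?thesis
    unfolding phi_def Fterm_def nu_def fst_conv snd_conv case_prod_conv
    unfolding e1 e2 e3 e4 f1 f2 c1 c2 nn
    by (simp add: mult_ac)
qed


lemma Tgt2:
  fixes l :: "nat \<Rightarrow> 'a::field_char_0"
  assumes p2: "p \<ge> 2" and D: "i + j \<ge> 1"
  shows "(\<Sum>t\<in>TF p R i j. Fterm l (nu t) t) = (\<Sum>x\<in>US p R i j. phi l R x)"
proof (rule sum.reindex_bij_witness[where i="\<lambda>(K, k1, k2). (k1 0, k2 0, k1(0 := 0), k2(0 := 0), K)"
      and j="\<lambda>(i0, j0, I, J, K). (K, I(0 := i0), J(0 := j0))"])
  fix t assume t: "t \<in> TF p R i j"
  obtain i0 j0 I J K where te: "t = (i0, j0, I, J, K)" by (cases t rule: prod_cases5)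
  have tt: "(i0, j0, I, J, K) \<in> TF p R i j" using t te by simp
  then have I: "I \<in> Fs {1..R}" and J: "J \<in> Fs {1..R}" by (auto simp: TF_def)
  then have "I 0 = 0" "J 0 = 0" by (auto simp: Fs_def)
  then show "(case (case t of (i0, j0, I, J, K) \<Rightarrow> (K, I(0 := i0), J(0 := j0))) of
      (K, k1, k2) \<Rightarrow> (k1 0, k2 0, k1(0 := 0), k2(0 := 0), K)) = t"
    using te by (auto simp: fun_eq_iff)
  show "(case t of (i0, j0, I, J, K) \<Rightarrow> (K, I(0 := i0), J(0 := j0))) \<in> US p R i j"
    using TF_US[OF p2 D tt] te by simp
  show "phi l R (case t of (i0, j0, I, J, K) \<Rightarrow> (K, I(0 := i0), J(0 := j0))) = Fterm l (nu t) t"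
    using summand_eq[OF tt, of l] te by simp
next
  fix x assume x: "x \<in> US p R i j"
  obtain K k1 k2 where xe: "x = (K, k1, k2)" by (cases x) auto
  have xx: "(K, k1, k2) \<in> US p R i j" using x xe by simp
  show "(case (case x of (K, k1, k2) \<Rightarrow> (k1 0, k2 0, k1(0 := 0), k2(0 := 0), K)) of
      (i0, j0, I, J, K) \<Rightarrow> (K, I(0 := i0), J(0 := j0))) = x"
    using xe by (auto simp: fun_eq_iff)
  show "(case x of (K, k1, k2) \<Rightarrow> (k1 0, k2 0, k1(0 := 0), k2(0 := 0), K)) \<in> TF p R i j"
    using US_TF[OF p2 xx] xe by simp
qed

lemma dvd_pow_minus1: "(p::nat) \<ge> 1 \<Longrightarrow> (p - 1) dvd (p ^ r - 1)"
proof (induction r)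
  case (Suc r)
  have eq: "p ^ Suc r - 1 = p * (p ^ r - 1) + (p - 1)"
  proof -
    have "p ^ r \<ge> 1" using Suc.prems by simp
    then show ?thesis using Suc.prems by (simp add: diff_mult_distrib2 algebra_simps)
  qed
  have "(p - 1) dvd p * (p ^ r - 1) + (p - 1)"
    using Suc by (intro dvd_add dvd_mult dvd_refl) simp_all
  then show ?case by (simp only: eq)
qed simp

lemma Vset_empty:
  assumes p2: "p \<ge> 2" and nd: "\<not> (p - 1) dvd (i + j - 1)"
  shows "Vset p i j = {}"
proof (rule ccontr)
  assume "Vset p i j \<noteq> {}"
  then obtain v where v: "v \<in> Vset p i j" by blast
  have "(p - 1) dvd (\<Sum>r\<in>{r. v r \<noteq> 0}. (p ^ r - 1) * v r)"
    using p2 by (intro dvd_sum dvd_mult2 dvd_pow_minus1) simp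
  then show False using v nd by (simp add: Vset_def)
qed

theorem proposition2p2:
  fixes p :: nat and l :: "nat \<Rightarrow> 'a::field_char_0" and i j :: nat
  assumes "prime p" and "i + j \<ge> 1"
  shows "FBP_coeff p l i j =
    (\<Sum>\<nu>\<in>{\<nu>. \<nu> 0 = 0 \<and> finite {r. \<nu> r \<noteq> 0} \<and>
              (\<Sum>r\<in>{r. \<nu> r \<noteq> 0}. (p ^ r - 1) * \<nu> r) = i + j - 1}.
      (\<Sum>(i0, j0, I, J, K)\<in>{(i0, j0, I, J, K).
            I 0 = 0 \<and> J 0 = 0 \<and> K 0 = 0 \<and>
            (\<forall>r\<ge>1. I r + J r + K r = \<nu> r) \<and>
            i0 + (\<Sum>r\<in>{r. \<nu> r \<noteq> 0}. p ^ r * I r) = i \<and>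
            j0 + (\<Sum>r\<in>{r. \<nu> r \<noteq> 0}. p ^ r * J r) = j}.
         (-1) ^ (\<Sum>r\<in>{r. \<nu> r \<noteq> 0}. K r) *
         (fact (i0 + j0 + (\<Sum>r\<in>{r. \<nu> r \<noteq> 0}. I r + J r + K r) - 1) /
          (fact i0 * fact j0 * (\<Prod>r\<in>{r. \<nu> r \<noteq> 0}. fact (I r) * fact (J r) * fact (K r))))
         * (\<Prod>r\<in>{r. \<nu> r \<noteq> 0}. l r ^ \<nu> r)))
   \<and> (\<not> (p - 1) dvd (i + j - 1) \<longrightarrow> FBP_coeff p l i j = 0)"
proof -
  have p2: "p \<ge> 2" using assms(1) by (simp add: prime_ge_2_nat)
  note D = assms(2)
  define R where "R = i + j"
  have rhs: "(\<Sum>\<nu>\<in>{\<nu>. \<nu> 0 = 0 \<and> finite {r. \<nu> r \<noteq> 0} \<and>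
              (\<Sum>r\<in>{r. \<nu> r \<noteq> 0}. (p ^ r - 1) * \<nu> r) = i + j - 1}.
      (\<Sum>(i0, j0, I, J, K)\<in>{(i0, j0, I, J, K).
            I 0 = 0 \<and> J 0 = 0 \<and> K 0 = 0 \<and>
            (\<forall>r\<ge>1. I r + J r + K r = \<nu> r) \<and>
            i0 + (\<Sum>r\<in>{r. \<nu> r \<noteq> 0}. p ^ r * I r) = i \<and>
            j0 + (\<Sum>r\<in>{r. \<nu> r \<noteq> 0}. p ^ r * J r) = j}.
         (-1) ^ (\<Sum>r\<in>{r. \<nu> r \<noteq> 0}. K r) *
         (fact (i0 + j0 + (\<Sum>r\<in>{r. \<nu> r \<noteq> 0}. I r + J r + K r) - 1) /
          (fact i0 * fact j0 * (\<Prod>r\<in>{r. \<nu> r \<noteq> 0}. fact (I r) * fact (J r) * fact (K r))))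
         * (\<Prod>r\<in>{r. \<nu> r \<noteq> 0}. l r ^ \<nu> r)))
      = (\<Sum>\<nu>\<in>Vset p i j. \<Sum>t\<in>Tset p i j \<nu>. Fterm l \<nu> t)"
    unfolding Vset_def Tset_def Fterm_def ..
  have main: "FBP_coeff p l i j = (\<Sum>\<nu>\<in>Vset p i j. \<Sum>t\<in>Tset p i j \<nu>. Fterm l \<nu> t)"
  proof -
    have "FBP_coeff p l i j = (\<Sum>x\<in>US p R i j. psi l R (nN R x) x)"
      by (rule FBP_US[OF p2 D R_def])
    also have "\<dots> = (\<Sum>x\<in>US p R i j. phi l R x)"
      by (intro sum.cong refl psi_phi)
    also have "\<dots> = (\<Sum>t\<in>TF p R i j. Fterm l (nu t) t)"
      by (rule Tgt2[OF p2 D, symmetric])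
    also have "\<dots> = (\<Sum>\<nu>\<in>Vset p i j. \<Sum>t\<in>Tset p i j \<nu>. Fterm l \<nu> t)"
      by (rule Tgt1[OF p2 R_def, symmetric])
    finally show ?thesis .
  qed
  show ?thesis unfolding rhs by (simp add: main Vset_empty[OF p2])
qed


end
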